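(* Let $j\in\mathbb Z$, and let $\lambda,\mu$ be partitions such that $\lambda$ has an addable node $\mathfrak l$ in column $j$ and $\mu$ has an addable node $\mathfrak m$ in column $j$; set $\lambda^+=\lambda\cup\{\mathfrak l\}$, $\mu^+=\mu\cup\{\mathfrak m\}$. Then $\mathrm e_{\lambda\mu}=\mathrm e_{\lambda\mu^+}+\mathrm e_{\lambda^+\mu^+}$.
   Context: Partitions are identified with Young diagrams $\{(a,b)\in\mathbb N^2:b\le\lambda_a\}$; nodes are elements of $\mathbb N^2$; $(a,b)$ has height $a+b$ and lies in column $b-a$ (smaller column = further left). An addable node of $\lambda$ is a node not in $\lambda$ whose addition gives a partition. $\mathtt{NE}(\mathfrak n)=\mathfrak n+(0,1)$, $\mathtt{SW}(\mathfrak n)=\mathfrak n-(0,1)$, $\mathtt{SE}(\mathfrak n)=\mathfrak n-(1,0)$. A tile is a finite nonempty set of nodes orderable $\mathfrak n_1,\dots,\mathfrak n_r$ with $\mathfrak n_{i+1}\in\{\mathtt{NE}(\mathfrak n_i),\mathtt{SE}(\mathfrak n_i)\}$; start = leftmost node, end = rightmost node; Dyck tile if start and end both attain the maximal height of its nodes. A Dyck tiling of $\lambda\setminus\mu$ is a partition of it into Dyck tiles. It is cover-expansive if whenever $\mathfrak a,\mathtt{SE}(\mathfrak a)\in\lambda\setminus\mu$, the tile of $\mathtt{SE}(\mathfrak a)$ starts weakly left of the start of the tile of $\mathfrak a$, and whenever $\mathfrak a,\mathtt{SW}(\mathfrak a)\in\lambda\setminus\mu$, the tile of $\mathtt{SW}(\mathfrak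 a)$ ends weakly right of the end of the tile of $\mathfrak a$. $\mathrm e_{\lambda\mu}$ is the number of cover-expansive Dyck tilings of $\lambda\setminus\mu$ if $\lambda\supseteq\mu$, and $0$ otherwise. *)

theory Defs
  imports Main
begin

text \<open>Nodes are pairs of integers; valid nodes (elements of N^2, N = positive integers)
  are those with both coordinates at least 1. A partition is identified with its
  Young diagram {(a,b). 1 <= a, 1 <= b <= lambda_a}, i.e. a finite set of valid nodes
  closed downwards in both coordinates.\<close>

type_synonym node = "int \<times> int"

definition valid_node :: "node \<Rightarrow> bool" where
  "valid_node n \<longleftrightarrow> fst n \<ge> 1 \<and> snd n \<ge> 1"

definition is_partition :: "node set \<Rightarrow> bool" where
  "is_partition S \<longleftrightarrow> finite S \<and> (\<forall>n\<in>S. valid_node n) \<and>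
     (\<forall>a b a' b'. (a, b) \<in> S \<and> 1 \<le> a' \<and> a' \<le> a \<and> 1 \<le> b' \<and> b' \<le> b \<longrightarrow> (a', b') \<in> S)"

definition height :: "node \<Rightarrow> int" where
  "height n = fst n + snd n"

definition column :: "node \<Rightarrow> int" where
  "column n = snd n - fst n"

definition addable :: "node set \<Rightarrow> node \<Rightarrow> bool" where
  "addable S n \<longleftrightarrow> valid_node n \<and> n \<notin> S \<and> is_partition (insert n S)"

definition NE :: "node \<Rightarrow> node" where "NE n = (fst n, snd n + 1)"
definition SW :: "node \<Rightarrow> node" where "SW n = (fst n, snd n - 1)"
definition SE :: "node \<Rightarrow> node" where "SE n = (fst n - 1, snd n)"

definition is_tile :: "node set \<Rightarrow> bool" where
  "is_tile T \<longleftrightarrow> finite T \<and> T \<noteq> {} \<and> (\<forall>n\<in>T. valid_node n) \<and>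
     (\<exists>ns. distinct ns \<and> set ns = T \<and>
        (\<forall>i. Suc i < length ns \<longrightarrow> ns ! Suc i \<in> {NE (ns ! i), SE (ns ! i)}))"

definition tile_start :: "node set \<Rightarrow> node" where
  "tile_start T = (THE n. n \<in> T \<and> (\<forall>m\<in>T. column n \<le> column m))"

definition tile_end :: "node set \<Rightarrow> node" where
  "tile_end T = (THE n. n \<in> T \<and> (\<forall>m\<in>T. column m \<le> column n))"

definition is_dyck_tile :: "node set \<Rightarrow> bool" where
  "is_dyck_tile T \<longleftrightarrow> is_tile T \<and>
     height (tile_start T) = Max (height ` T) \<and> height (tile_end T) = Max (height ` T)"

definition dyck_tiling :: "node set \<Rightarrow> node set \<Rightarrow> node set set \<Rightarrow> bool" where
  "dyck_tiling lam mu P \<longleftrightarrow> (\<forall>T\<in>P. is_dyck_tile T) \<and> \<Union>P = lam - mu \<and>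
     (\<forall>T\<in>P. \<forall>T'\<in>P. T \<noteq> T' \<longrightarrow> T \<inter> T' = {})"

definition tile_of :: "node set set \<Rightarrow> node \<Rightarrow> node set" where
  "tile_of P n = (THE T. T \<in> P \<and> n \<in> T)"

definition cover_expansive :: "node set \<Rightarrow> node set \<Rightarrow> node set set \<Rightarrow> bool" where
  "cover_expansive lam mu P \<longleftrightarrow>
     (\<forall>a. a \<in> lam - mu \<and> SE a \<in> lam - mu \<longrightarrow>
        column (tile_start (tile_of P (SE a))) \<le> column (tile_start (tile_of P a))) \<and>
     (\<forall>a. a \<in> lam - mu \<and> SW a \<in> lam - mu \<longrightarrow>
        column (tile_end (tile_of P a)) \<le> column (tile_end (tile_of P (SW a))))"

definition e_num :: "node set \<Rightarrow> node set \<Rightarrow> nat" where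
  "e_num lam mu = (if mu \<subseteq> lam
     then card {P. dyck_tiling lam mu P \<and> cover_expansive lam mu P} else 0)"

end

theory Submission
  imports Defs
begin


definition pth :: "node set \<Rightarrow> bool" where
 "pth T \<longleftrightarrow> finite T \<and> T \<noteq> {} \<and> (\<forall>x\<in>T. valid_node x) \<and>
   (\<forall>x\<in>T. \<forall>y\<in>T. column x = column y \<longrightarrow> x = y) \<and>
   (\<forall>x\<in>T. \<forall>y\<in>T. \<forall>c. column x \<le> c \<and> c \<le> column y \<longrightarrow> (\<exists>z\<in>T. column z = c)) \<and>
   (\<forall>x\<in>T. \<forall>y\<in>T. column y = column x + 1 \<longrightarrow> y = NE x \<or> y = SE x)"

lemma chain_col:
  assumes "\<forall>i. Suc i < length ns \<longrightarrow> ns ! Suc i \<in> {NE (ns ! i), SE (ns ! i)}"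
  shows "i < length ns \<Longrightarrow> column (ns ! i) = column (ns ! 0) + int i"
proof (induction i)
  case 0 then show ?case by simp
next
  case (Suc i)
  then have "ns ! Suc i \<in> {NE (ns ! i), SE (ns ! i)}" using assms by auto
  then have "column (ns ! Suc i) = column (ns ! i) + 1"
    by (auto simp: NE_def SE_def column_def)
  then show ?case using Suc by simp
qed

lemma tile_pth: "is_tile T \<Longrightarrow> pth T"
proof -
  assume "is_tile T"
  then obtain ns where T: "finite T" "T \<noteq> {}" "\<forall>n\<in>T. valid_node n" "distinct ns" "set ns = T"
    and ch: "\<forall>i. Suc i < length ns \<longrightarrow> ns ! Suc i \<in> {NE (ns ! i), SE (ns ! i)}"
    by (auto simp: is_tile_def)
  have cc: "\<And>i. i < length ns \<Longrightarrow> column (ns ! i) = column (ns ! 0) + int i"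
    using chain_col[OF ch] by blast
  have mem: "\<exists>i<length ns. x = ns ! i" if "x \<in> T" for x
  proof -
    have "x \<in> set ns" using T(5) that by simp
    then show ?thesis unfolding in_set_conv_nth by metis
  qed
  show "pth T" unfolding pth_def
  proof (intro conjI ballI allI impI)
    show "finite T" "T \<noteq> {}" using T by auto
  next
    fix x assume "x \<in> T" then show "valid_node x" using T by auto
  next
    fix x y assume "x \<in> T" "y \<in> T" "column x = column y"
    then obtain i i' where "i < length ns" "i' < length ns" "x = ns ! i" "y = ns ! i'"
      using mem by blast
    then show "x = y" using cc \<open>column x = column y\<close> by auto
  next
    fix x y c assume a: "x \<in> T" "y \<in> T" "column x \<le> c \<and> c \<le> column y"
    then obtain i i' where i: "i < length ns" "i' < length ns" "x = ns ! i" "y = ns ! i'"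
      using mem by blast
    define r where "r = nat (c - column (ns ! 0))"
    have "c = column (ns ! 0) + int r" using a i cc unfolding r_def by auto
    moreover have "r < length ns" using a i cc unfolding r_def by auto
    ultimately show "\<exists>z\<in>T. column z = c" using cc T(5) by (intro bexI[of _ "ns ! r"]) auto
  next
    fix x y assume a: "x \<in> T" "y \<in> T" "column y = column x + 1"
    then obtain i i' where i: "i < length ns" "i' < length ns" "x = ns ! i" "y = ns ! i'"
      using mem by blast
    then have "i' = Suc i" using cc a by auto
    then show "y = NE x \<or> y = SE x" using ch i by auto
  qed
qed

lemma pth_tile: "pth T \<Longrightarrow> is_tile T"
proof -
  assume p: "pth T"
  then have fin: "finite T" and ne: "T \<noteq> {}" and inj: "\<And>x y. x\<in>T \<Longrightarrow> y\<in>T \<Longrightarrow> column x = column y \<Longrightarrow> x = y"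
    and itv: "\<And>x y c. x\<in>T \<Longrightarrow> y\<in>T \<Longrightarrow> column x \<le> c \<Longrightarrow> c \<le> column y \<Longrightarrow> \<exists>z\<in>T. column z = c"
    and adj: "\<And>x y. x\<in>T \<Longrightarrow> y\<in>T \<Longrightarrow> column y = column x + 1 \<Longrightarrow> y = NE x \<or> y = SE x"
    unfolding pth_def by blast+
  define S where "S = column ` T"
  define c0 where "c0 = Min S"
  define n where "n = card T"
  have finS: "finite S" and neS: "S \<noteq> {}" using fin ne unfolding S_def by auto
  have c0S: "c0 \<in> S" and c0le: "\<And>c. c \<in> S \<Longrightarrow> c0 \<le> c" using finS neS unfolding c0_def by auto
  have cardS: "card S = n" unfolding S_def n_def by (rule card_image) (use inj in \<open>auto simp: inj_on_def\<close>)
  have sub: "S \<subseteq> {c0..<c0 + int n}"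
  proof
    fix c assume cS: "c \<in> S"
    have "c < c0 + int n"
    proof (rule ccontr)
      assume "\<not> c < c0 + int n"
      have "{c0..c} \<subseteq> S"
      proof
        fix d assume "d \<in> {c0..c}"
        then obtain z where "z \<in> T" "column z = d" using itv c0S cS unfolding S_def by force
        then show "d \<in> S" unfolding S_def by auto
      qed
      then have "card {c0..c} \<le> card S" using finS by (rule card_mono[rotated])
      then show False using \<open>\<not> c < c0 + int n\<close> cardS by auto
    qed
    then show "c \<in> {c0..<c0 + int n}" using c0le cS by auto
  qed
  have Seq: "S = {c0..<c0 + int n}"
    by (rule card_subset_eq) (use sub cardS in auto)
  define nd where "nd = (\<lambda>c. THE x. x \<in> T \<and> column x = c)"
  have nd: "\<And>c. c \<in> S \<Longrightarrow> nd c \<in> T \<and> column (nd c) = c"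
  proof -
    fix c assume "c \<in> S"
    then obtain x where "x \<in> T" "column x = c" unfolding S_def by auto
    then have "\<exists>!x. x \<in> T \<and> column x = c" using inj by auto
    then show "nd c \<in> T \<and> column (nd c) = c" unfolding nd_def by (rule theI')
  qed
  define ns where "ns = map (\<lambda>i. nd (c0 + int i)) [0..<n]"
  have ln: "length ns = n" unfolding ns_def by simp
  have nth: "\<And>i. i < n \<Longrightarrow> ns ! i \<in> T \<and> column (ns ! i) = c0 + int i"
    unfolding ns_def using nd Seq by auto
  show "is_tile T" unfolding is_tile_def
  proof (intro conjI exI[of _ ns])
    show "finite T" "T \<noteq> {}" using fin ne by auto
    show "\<forall>n\<in>T. valid_node n" using p unfolding pth_def by blast
    show "distinct ns" unfolding distinct_conv_nth ln
    proof (intro allI impI)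
      fix i i' assume "i < n" "i' < n" "i \<noteq> i'"
      then have "column (ns ! i) \<noteq> column (ns ! i')" using nth by auto
      then show "ns ! i \<noteq> ns ! i'" by metis
    qed
    show "set ns = T"
    proof
      show "set ns \<subseteq> T"
      proof
        fix x assume "x \<in> set ns"
        then obtain i where "i < length ns" "x = ns ! i" by (auto simp: in_set_conv_nth)
        then show "x \<in> T" using nth ln by auto
      qed
      show "T \<subseteq> set ns"
      proof
        fix x assume x: "x \<in> T"
        then have "column x \<in> S" unfolding S_def by auto
        define i where "i = nat (column x - c0)"
        have i: "i < n" "column x = c0 + int i" using \<open>column x \<in> S\<close> unfolding Seq i_def by auto
        then have "ns ! i = x" using nth inj x by auto
        then show "x \<in> set ns" using i ln by (auto simp: in_set_conv_nth)
      qed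
    qed
    show "\<forall>i. Suc i < length ns \<longrightarrow> ns ! Suc i \<in> {NE (ns ! i), SE (ns ! i)}"
      using nth adj ln by auto
  qed
qed

lemma is_tile_pth: "is_tile T \<longleftrightarrow> pth T" using tile_pth pth_tile by blast



definition Mx :: "node set \<Rightarrow> int" where "Mx T = Max (height ` T)"
definition UL :: "node \<Rightarrow> node" where "UL n = (fst n + 1, snd n)"

definition tiling :: "node set \<Rightarrow> node set set \<Rightarrow> bool" where
 "tiling E P \<longleftrightarrow> (\<forall>T\<in>P. is_dyck_tile T) \<and> \<Union>P = E \<and> (\<forall>T\<in>P. \<forall>T'\<in>P. T \<noteq> T' \<longrightarrow> T \<inter> T' = {})"

definition lnk :: "node set set \<Rightarrow> node \<Rightarrow> node \<Rightarrow> bool" where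
 "lnk P x y \<longleftrightarrow> (\<exists>T\<in>P. x \<in> T \<and> y \<in> T \<and> column y = column x + 1)"

definition loc :: "node set \<Rightarrow> node set set \<Rightarrow> bool" where
 "loc E P \<longleftrightarrow> (\<forall>x\<in>E. UL x \<in> E \<longrightarrow> (\<exists>w. lnk P w x)) \<and> (\<forall>x\<in>E. NE x \<in> E \<longrightarrow> (\<exists>y. lnk P x y))"

definition ce :: "node set \<Rightarrow> node set set \<Rightarrow> bool" where
  "ce E P \<longleftrightarrow>
     (\<forall>a. a \<in> E \<and> SE a \<in> E \<longrightarrow>
        column (tile_start (tile_of P (SE a))) \<le> column (tile_start (tile_of P a))) \<and>
     (\<forall>a. a \<in> E \<and> SW a \<in> E \<longrightarrow>
        column (tile_end (tile_of P a)) \<le> column (tile_end (tile_of P (SW a))))"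

definition sp :: "node set set \<Rightarrow> node \<Rightarrow> int" where "sp P x = column (tile_start (tile_of P x))"
definition ep :: "node set set \<Rightarrow> node \<Rightarrow> int" where "ep P x = column (tile_end (tile_of P x))"

lemma ce_cover: "cover_expansive lam mu P = ce (lam - mu) P"
  unfolding cover_expansive_def ce_def by simp

lemma dt_tiling: "dyck_tiling lam mu P = tiling (lam - mu) P"
  unfolding dyck_tiling_def tiling_def by simp

lemma pth_minmax:
  assumes "pth T"
  shows "\<exists>x\<in>T. \<forall>y\<in>T. column x \<le> column y" "\<exists>x\<in>T. \<forall>y\<in>T. column y \<le> column x"
proof -
  have f: "finite (column ` T)" "column ` T \<noteq> {}" using assms unfolding pth_def by auto
  obtain x where "x \<in> T" "column x = Min (column ` T)" using Min_in[OF f] by auto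
  moreover have "\<forall>y\<in>T. column x \<le> column y" using Min_le[OF f(1)] \<open>column x = _\<close> by simp
  ultimately show "\<exists>x\<in>T. \<forall>y\<in>T. column x \<le> column y" by blast
  obtain x where "x \<in> T" "column x = Max (column ` T)" using Max_in[OF f] by auto
  moreover have "\<forall>y\<in>T. column y \<le> column x" using Max_ge[OF f(1)] \<open>column x = _\<close> by simp
  ultimately show "\<exists>x\<in>T. \<forall>y\<in>T. column y \<le> column x" by blast
qed

lemma pth_colinj: "pth T \<Longrightarrow> x \<in> T \<Longrightarrow> y \<in> T \<Longrightarrow> column x = column y \<Longrightarrow> x = y"
  unfolding pth_def by blast

lemma pth_itv: "pth T \<Longrightarrow> x \<in> T \<Longrightarrow> y \<in> T \<Longrightarrow> column x \<le> c \<Longrightarrow> c \<le> column y \<Longrightarrow> \<exists>z\<in>T. column z = c"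
  unfolding pth_def by blast

lemma pth_adj: "pth T \<Longrightarrow> x \<in> T \<Longrightarrow> y \<in> T \<Longrightarrow> column y = column x + 1 \<Longrightarrow> y = NE x \<or> y = SE x"
  unfolding pth_def by blast

lemma start_char:
  assumes "pth T" "x \<in> T" "\<forall>y\<in>T. column x \<le> column y"
  shows "tile_start T = x"
proof -
  have "\<exists>!x. x \<in> T \<and> (\<forall>m\<in>T. column x \<le> column m)"
    using assms pth_colinj[OF assms(1)] by (metis order_antisym)
  then show ?thesis unfolding tile_start_def by (rule the1_equality) (use assms in auto)
qed

lemma end_char:
  assumes "pth T" "x \<in> T" "\<forall>y\<in>T. column y \<le> column x"
  shows "tile_end T = x"
proof -
  have "\<exists>!x. x \<in> T \<and> (\<forall>m\<in>T. column m \<le> column x)"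
    using assms pth_colinj[OF assms(1)] by (metis order_antisym)
  then show ?thesis unfolding tile_end_def by (rule the1_equality) (use assms in auto)
qed

lemma start_prop: "pth T \<Longrightarrow> tile_start T \<in> T \<and> (\<forall>y\<in>T. column (tile_start T) \<le> column y)"
  using pth_minmax(1) start_char by metis

lemma end_prop: "pth T \<Longrightarrow> tile_end T \<in> T \<and> (\<forall>y\<in>T. column y \<le> column (tile_end T))"
  using pth_minmax(2) end_char by metis

lemma pth_fin: "pth T \<Longrightarrow> finite T" unfolding pth_def by blast
lemma pth_ne: "pth T \<Longrightarrow> T \<noteq> {}" unfolding pth_def by blast
lemma pth_valid: "pth T \<Longrightarrow> x \<in> T \<Longrightarrow> valid_node x" unfolding pth_def by blast

lemma Mx_ge: "pth T \<Longrightarrow> x \<in> T \<Longrightarrow> height x \<le> Mx T"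
  unfolding Mx_def using pth_fin by simp

lemma Mx_in: "pth T \<Longrightarrow> \<exists>x\<in>T. height x = Mx T"
proof -
  assume "pth T"
  then have "finite (height ` T)" "height ` T \<noteq> {}" using pth_fin pth_ne by auto
  then have "Mx T \<in> height ` T" unfolding Mx_def by (rule Max_in)
  then show ?thesis by auto
qed

lemma dyck_iff: "is_dyck_tile T \<longleftrightarrow> pth T \<and> height (tile_start T) = Mx T \<and> height (tile_end T) = Mx T"
  unfolding is_dyck_tile_def is_tile_pth Mx_def by simp

context
  fixes E P assumes tl: "tiling E P"
begin

lemma t_pth: "T \<in> P \<Longrightarrow> pth T"
  using tl unfolding tiling_def dyck_iff by blast

lemma t_dyck: "T \<in> P \<Longrightarrow> height (tile_start T) = Mx T \<and> height (tile_end T) = Mx T"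
  using tl unfolding tiling_def dyck_iff by blast

lemma t_union: "\<Union>P = E" using tl unfolding tiling_def by blast

lemma t_sub: "T \<in> P \<Longrightarrow> T \<subseteq> E" using t_union by blast

lemma t_disj: "T \<in> P \<Longrightarrow> T' \<in> P \<Longrightarrow> x \<in> T \<Longrightarrow> x \<in> T' \<Longrightarrow> T = T'"
  using tl unfolding tiling_def by blast

lemma tile_of_eq: "T \<in> P \<Longrightarrow> x \<in> T \<Longrightarrow> tile_of P x = T"
  unfolding tile_of_def using t_disj by (metis (mono_tags, lifting) the_equality)

lemma tile_of_in: "x \<in> E \<Longrightarrow> tile_of P x \<in> P \<and> x \<in> tile_of P x"
  using tile_of_eq t_union by blast

lemma lnk_D: "lnk P x y \<Longrightarrow> x \<in> E \<and> y \<in> E \<and> column y = column x + 1 \<and> (y = NE x \<or> y = SE x) \<and> tile_of P x = tile_of P y"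
proof -
  assume "lnk P x y"
  then obtain T where T: "T \<in> P" "x \<in> T" "y \<in> T" "column y = column x + 1" unfolding lnk_def by blast
  then show ?thesis using t_sub[OF T(1)] pth_adj[OF t_pth[OF T(1)] T(2,3,4)] tile_of_eq[OF T(1)] by auto
qed

lemma lnk_fun: "lnk P x y \<Longrightarrow> lnk P x y' \<Longrightarrow> y = y'"
proof -
  assume "lnk P x y" "lnk P x y'"
  then obtain T T' where "T \<in> P" "x \<in> T" "y \<in> T" "column y = column x + 1"
    "T' \<in> P" "x \<in> T'" "y' \<in> T'" "column y' = column x + 1" unfolding lnk_def by blast
  then show ?thesis using t_disj[of T T' x] pth_colinj[OF t_pth, of T y y'] by simp
qed

lemma lnk_inj: "lnk P x y \<Longrightarrow> lnk P x' y \<Longrightarrow> x = x'"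
proof -
  assume "lnk P x y" "lnk P x' y"
  then obtain T T' where "T \<in> P" "x \<in> T" "y \<in> T" "column y = column x + 1"
    "T' \<in> P" "x' \<in> T'" "y \<in> T'" "column y = column x' + 1" unfolding lnk_def by blast
  then show ?thesis using t_disj[of T T' y] pth_colinj[OF t_pth, of T x x'] by simp
qed

lemma lnk_sp: "lnk P x y \<Longrightarrow> sp P x = sp P y"
  unfolding sp_def using lnk_D by simp

lemma lnk_ep: "lnk P x y \<Longrightarrow> ep P x = ep P y"
  unfolding ep_def using lnk_D by simp

lemma sp_le: "x \<in> E \<Longrightarrow> sp P x \<le> column x"
  unfolding sp_def using tile_of_in start_prop t_pth by blast

lemma ep_ge: "x \<in> E \<Longrightarrow> column x \<le> ep P x"
  unfolding ep_def using tile_of_in end_prop t_pth by blast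

lemma pred_ex: "T \<in> P \<Longrightarrow> x \<in> T \<Longrightarrow> column (tile_start T) < column x \<Longrightarrow> \<exists>w\<in>T. lnk P w x"
proof -
  assume a: "T \<in> P" "x \<in> T" "column (tile_start T) < column x"
  have "tile_start T \<in> T" using start_prop t_pth a by blast
  have "\<exists>z\<in>T. column z = column x - 1" by (rule pth_itv[OF t_pth[OF a(1)] \<open>tile_start T \<in> T\<close> a(2)]) (use a in auto)
  then obtain w where "w \<in> T" "column w = column x - 1" by blast
  then show ?thesis unfolding lnk_def using a by force
qed

lemma succ_ex: "T \<in> P \<Longrightarrow> x \<in> T \<Longrightarrow> column x < column (tile_end T) \<Longrightarrow> \<exists>y\<in>T. lnk P x y"
proof -
  assume a: "T \<in> P" "x \<in> T" "column x < column (tile_end T)"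
  have "tile_end T \<in> T" using end_prop t_pth a by blast
  have "\<exists>z\<in>T. column z = column x + 1" by (rule pth_itv[OF t_pth[OF a(1)] a(2) \<open>tile_end T \<in> T\<close>]) (use a in auto)
  then obtain w where "w \<in> T" "column w = column x + 1" by blast
  then show ?thesis unfolding lnk_def using a by force
qed

lemma pred_iff: "x \<in> E \<Longrightarrow> (\<exists>w. lnk P w x) \<longleftrightarrow> sp P x < column x"
proof
  assume x: "x \<in> E" and "\<exists>w. lnk P w x"
  then obtain w where "lnk P w x" by blast
  then show "sp P x < column x" using lnk_D[of w x] sp_le[of w] lnk_sp[of w x] by auto
next
  assume x: "x \<in> E" and "sp P x < column x"
  then show "\<exists>w. lnk P w x" using pred_ex[of "tile_of P x" x] tile_of_in unfolding sp_def by blast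
qed

lemma succ_iff: "x \<in> E \<Longrightarrow> (\<exists>y. lnk P x y) \<longleftrightarrow> column x < ep P x"
proof
  assume x: "x \<in> E" and "\<exists>y. lnk P x y"
  then obtain y where "lnk P x y" by blast
  then show "column x < ep P x" using lnk_D[of x y] ep_ge[of y] lnk_ep[of x y] by auto
next
  assume x: "x \<in> E" and "column x < ep P x"
  then show "\<exists>y. lnk P x y" using succ_ex[of "tile_of P x" x] tile_of_in unfolding ep_def by blast
qed

lemma start_nopred: "T \<in> P \<Longrightarrow> lnk P w (tile_start T) \<Longrightarrow> False"
proof -
  assume a: "T \<in> P" "lnk P w (tile_start T)"
  have s: "tile_start T \<in> T" using start_prop t_pth a by blast
  then have "tile_of P (tile_start T) = T" using tile_of_eq a by blast
  then have e: "sp P (tile_start T) = column (tile_start T)" unfolding sp_def by simp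
  have "tile_start T \<in> E" using s a t_sub by blast
  have "sp P (tile_start T) < column (tile_start T)"
    by (rule iffD1[OF pred_iff[OF \<open>tile_start T \<in> E\<close>]]) (rule exI, rule a(2))
  then show False using e by simp
qed

lemma end_nosucc: "T \<in> P \<Longrightarrow> lnk P (tile_end T) y \<Longrightarrow> False"
proof -
  assume a: "T \<in> P" "lnk P (tile_end T) y"
  have s: "tile_end T \<in> T" using end_prop t_pth a by blast
  then have "tile_of P (tile_end T) = T" using tile_of_eq a by blast
  then have e: "ep P (tile_end T) = column (tile_end T)" unfolding ep_def by simp
  have "tile_end T \<in> E" using s a t_sub by blast
  have "column (tile_end T) < ep P (tile_end T)"
    by (rule iffD1[OF succ_iff[OF \<open>tile_end T \<in> E\<close>]]) (rule exI, rule a(2))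
  then show False using e by simp
qed

lemma lnk_same: "lnk P x y \<Longrightarrow> T \<in> P \<Longrightarrow> y \<in> T \<Longrightarrow> x \<in> T"
proof -
  assume a: "lnk P x y" "T \<in> P" "y \<in> T"
  then obtain T' where "T' \<in> P" "x \<in> T'" "y \<in> T'" unfolding lnk_def by blast
  then show ?thesis using t_disj[OF a(2) \<open>T' \<in> P\<close> a(3)] by simp
qed

lemma lnk_same2: "lnk P x y \<Longrightarrow> T \<in> P \<Longrightarrow> x \<in> T \<Longrightarrow> y \<in> T"
proof -
  assume a: "lnk P x y" "T \<in> P" "x \<in> T"
  then obtain T' where "T' \<in> P" "x \<in> T'" "y \<in> T'" unfolding lnk_def by blast
  then show ?thesis using t_disj[OF a(2) \<open>T' \<in> P\<close> a(3)] by simp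
qed

end



lemmas nds = NE_def SE_def SW_def UL_def column_def height_def

definition cvx :: "node set \<Rightarrow> bool" where
  "cvx E \<longleftrightarrow> (\<forall>x y z. x \<in> E \<longrightarrow> z \<in> E \<longrightarrow> fst x \<le> fst y \<longrightarrow> fst y \<le> fst z \<longrightarrow>
      snd x \<le> snd y \<longrightarrow> snd y \<le> snd z \<longrightarrow> y \<in> E)"

lemma cvxD: "cvx E \<Longrightarrow> x \<in> E \<Longrightarrow> z \<in> E \<Longrightarrow> fst x \<le> fst y \<Longrightarrow> fst y \<le> fst z \<Longrightarrow>
      snd x \<le> snd y \<Longrightarrow> snd y \<le> snd z \<Longrightarrow> y \<in> E"
  unfolding cvx_def by blast

lemma part_down: "is_partition S \<Longrightarrow> z \<in> S \<Longrightarrow> 1 \<le> fst y \<Longrightarrow> 1 \<le> snd y \<Longrightarrow> fst y \<le> fst z \<Longrightarrow> snd y \<le> snd z \<Longrightarrow> y \<in> S"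
proof -
  assume a: "is_partition S" "z \<in> S" "1 \<le> fst y" "1 \<le> snd y" "fst y \<le> fst z" "snd y \<le> snd z"
  have H: "\<And>a b a' b'. (a,b) \<in> S \<Longrightarrow> 1 \<le> a' \<Longrightarrow> a' \<le> a \<Longrightarrow> 1 \<le> b' \<Longrightarrow> b' \<le> b \<Longrightarrow> (a',b') \<in> S"
    using a(1) unfolding is_partition_def by blast
  show ?thesis using H[of "fst z" "snd z" "fst y" "snd y"] a by simp
qed

lemma part_valid: "is_partition S \<Longrightarrow> x \<in> S \<Longrightarrow> 1 \<le> fst x \<and> 1 \<le> snd x"
  unfolding is_partition_def valid_node_def by blast

lemma part_fin: "is_partition S \<Longrightarrow> finite S"
  unfolding is_partition_def by blast

lemma cvx_diff: "is_partition lam \<Longrightarrow> is_partition mu \<Longrightarrow> cvx (lam - mu)"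
  unfolding cvx_def
proof (intro allI impI)
  fix x y z assume a: "is_partition lam" "is_partition mu" "x \<in> lam - mu" "z \<in> lam - mu"
    "fst x \<le> fst y" "fst y \<le> fst z" "snd x \<le> snd y" "snd y \<le> snd z"
  have v: "1 \<le> fst x \<and> 1 \<le> snd x" using part_valid[OF a(1)] a(3) by blast
  have "y \<in> lam" using part_down[OF a(1), of z y] a v by auto
  moreover have "y \<notin> mu"
  proof
    assume "y \<in> mu"
    then have "x \<in> mu" using part_down[OF a(2), of y x] a v by auto
    then show False using a by auto
  qed
  ultimately show "y \<in> lam - mu" by blast
qed

context
  fixes E P assumes tl: "tiling E P" and lc: "loc E P" and cv: "cvx E"
begin

lemma pred_cases: "lnk P w x \<Longrightarrow> w = SW x \<or> w = UL x"
  using lnk_D[OF tl, of w x] by (cases w, cases x) (auto simp: nds)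

lemma has_pred: "x \<in> E \<Longrightarrow> UL x \<in> E \<Longrightarrow> \<exists>w. lnk P w x"
  using lc unfolding loc_def by blast

lemma has_succ: "x \<in> E \<Longrightarrow> NE x \<in> E \<Longrightarrow> \<exists>y. lnk P x y"
  using lc unfolding loc_def by blast

lemma walkS: "nat (column x - sp P x) = n \<Longrightarrow> x \<in> E \<Longrightarrow> y \<in> E \<Longrightarrow> tile_of P x \<noteq> tile_of P y \<Longrightarrow>
   column y = column x + 1 \<Longrightarrow> height y < height x \<Longrightarrow> sp P y \<le> sp P x"
proof (induction n arbitrary: x y rule: less_induct)
  case (less n)
  have "UL y \<in> E"
    by (rule cvxD[OF cv less.prems(3) less.prems(2)]) (use less.prems(5,6) in \<open>auto simp: nds\<close>)
  then obtain y' where y': "lnk P y' y" using has_pred less.prems(3) by blast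
  note Y = lnk_D[OF tl y']
  show ?case
  proof (cases "\<exists>w. lnk P w x")
    case False
    then have "sp P x = column x" using pred_iff[OF tl less.prems(2)] sp_le[OF tl less.prems(2)] by simp
    moreover have "sp P y' \<le> column y'" using sp_le[OF tl] Y by blast
    ultimately show ?thesis using lnk_sp[OF tl y'] Y less.prems(5) by simp
  next
    case True
    then obtain x' where x': "lnk P x' x" by blast
    note X = lnk_D[OF tl x']
    have ne: "y' \<noteq> x" using Y less.prems(4) by auto
    have h: "height y' < height x'"
    proof -
      have c1: "y' = SW y \<or> y' = UL y" by (rule pred_cases[OF y'])
      have c2: "x' = SW x \<or> x' = UL x" by (rule pred_cases[OF x'])
      show ?thesis using c1 c2 ne less.prems(5,6)
        by (cases x, cases y) (auto simp: nds)
    qed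
    have "sp P x < column x" using pred_iff[OF tl less.prems(2)] True by blast
    then have m: "nat (column x' - sp P x') < n" using less.prems(1) lnk_sp[OF tl x'] X by auto
    have "sp P y' \<le> sp P x'"
      by (rule less.IH[OF m refl]) (use X Y less.prems h in auto)
    then show ?thesis using lnk_sp[OF tl x'] lnk_sp[OF tl y'] by simp
  qed
qed

lemma walkE: "nat (ep P y - column y) = n \<Longrightarrow> x \<in> E \<Longrightarrow> y \<in> E \<Longrightarrow> tile_of P x \<noteq> tile_of P y \<Longrightarrow>
   column y = column x + 1 \<Longrightarrow> height x < height y \<Longrightarrow> ep P y \<le> ep P x"
proof (induction n arbitrary: x y rule: less_induct)
  case (less n)
  have "NE x \<in> E"
    by (rule cvxD[OF cv less.prems(2) less.prems(3)]) (use less.prems(5,6) in \<open>auto simp: nds\<close>)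
  then obtain x' where x': "lnk P x x'" using has_succ less.prems(2) by blast
  note X = lnk_D[OF tl x']
  show ?case
  proof (cases "\<exists>w. lnk P y w")
    case False
    then have "ep P y = column y" using succ_iff[OF tl less.prems(3)] ep_ge[OF tl less.prems(3)] by simp
    moreover have "column x' \<le> ep P x'" using ep_ge[OF tl] X by blast
    ultimately show ?thesis using lnk_ep[OF tl x'] X less.prems(5) by simp
  next
    case True
    then obtain y' where y': "lnk P y y'" by blast
    note Y = lnk_D[OF tl y']
    have ne: "x' \<noteq> y" using X less.prems(4) by auto
    have h: "height x' < height y'"
    proof -
      have c1: "y' = NE y \<or> y' = SE y" using Y by blast
      have c2: "x' = NE x \<or> x' = SE x" using X by blast
      show ?thesis using c1 c2 ne less.prems(5,6)
        by (cases x, cases y) (auto simp: nds)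
    qed
    have "column y < ep P y" using succ_iff[OF tl less.prems(3)] True by blast
    then have m: "nat (ep P y' - column y') < n" using less.prems(1) lnk_ep[OF tl y'] Y by auto
    have "ep P y' \<le> ep P x'"
      by (rule less.IH[OF m refl]) (use X Y less.prems h in auto)
    then show ?thesis using lnk_ep[OF tl x'] lnk_ep[OF tl y'] by simp
  qed
qed

lemma loc_ce: "ce E P"
  unfolding ce_def
proof (intro conjI allI impI)
  fix a assume a: "a \<in> E \<and> SE a \<in> E"
  show "column (tile_start (tile_of P (SE a))) \<le> column (tile_start (tile_of P a))"
  proof (cases "tile_of P a = tile_of P (SE a)")
    case True then show ?thesis by simp
  next
    case False
    have "sp P (SE a) \<le> sp P a"
      by (rule walkS[OF refl]) (use a False in \<open>auto simp: nds\<close>)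
    then show ?thesis unfolding sp_def .
  qed
next
  fix a assume a: "a \<in> E \<and> SW a \<in> E"
  show "column (tile_end (tile_of P a)) \<le> column (tile_end (tile_of P (SW a)))"
  proof (cases "tile_of P (SW a) = tile_of P a")
    case True then show ?thesis by simp
  next
    case False
    have "ep P a \<le> ep P (SW a)"
      by (rule walkE[OF refl]) (use a False in \<open>auto simp: nds\<close>)
    then show ?thesis unfolding ep_def .
  qed
qed

end

lemma ce_loc:
  assumes tl: "tiling E P" and c: "ce E P"
  shows "loc E P"
  unfolding loc_def
proof (intro conjI ballI impI)
  fix x assume x: "x \<in> E" "UL x \<in> E"
  have "SE (UL x) = x" by (cases x) (simp add: nds)
  then have "sp P x \<le> sp P (UL x)" using c x unfolding ce_def sp_def by metis
  also have "\<dots> \<le> column (UL x)" using sp_le[OF tl x(2)] .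
  also have "\<dots> < column x" by (cases x) (simp add: nds)
  finally show "\<exists>w. lnk P w x" using pred_iff[OF tl x(1)] by blast
next
  fix x assume x: "x \<in> E" "NE x \<in> E"
  have "SW (NE x) = x" by (cases x) (simp add: nds)
  then have "ep P (NE x) \<le> ep P x" using c x unfolding ce_def ep_def by metis
  moreover have "column (NE x) \<le> ep P (NE x)" using ep_ge[OF tl x(2)] .
  moreover have "column x < column (NE x)" by (cases x) (simp add: nds)
  ultimately show "\<exists>y. lnk P x y" using succ_iff[OF tl x(1)] by simp
qed

lemma ce_iff_loc: "tiling E P \<Longrightarrow> cvx E \<Longrightarrow> ce E P \<longleftrightarrow> loc E P"
  using ce_loc loc_ce by blast



lemma pthI:
  assumes "finite T" "T \<noteq> {}" "\<And>x. x \<in> T \<Longrightarrow> valid_node x"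
    "\<And>x y. x \<in> T \<Longrightarrow> y \<in> T \<Longrightarrow> column x = column y \<Longrightarrow> x = y"
    "\<And>x y c. x \<in> T \<Longrightarrow> y \<in> T \<Longrightarrow> column x \<le> c \<Longrightarrow> c \<le> column y \<Longrightarrow> \<exists>z\<in>T. column z = c"
    "\<And>x y. x \<in> T \<Longrightarrow> y \<in> T \<Longrightarrow> column y = column x + 1 \<Longrightarrow> y = NE x \<or> y = SE x"
  shows "pth T"
  unfolding pth_def using assms by blast

definition dy :: "node set \<Rightarrow> bool" where
  "dy T \<longleftrightarrow> pth T \<and> height (tile_start T) = Mx T \<and> height (tile_end T) = Mx T"

lemma dy_dyck: "is_dyck_tile T \<longleftrightarrow> dy T" unfolding dy_def dyck_iff ..

lemma nd_col_eq: "column (a::node) = column b \<Longrightarrow> height a = height b \<Longrightarrow> a = b"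
  by (cases a, cases b) (simp add: nds)

lemma pth_replace:
  assumes p: "pth T" and v: "v \<in> T" and cv: "column v' = column v" and vv: "valid_node v'"
    and L: "\<And>x. x \<in> T \<Longrightarrow> column x = column v - 1 \<Longrightarrow> v' = NE x \<or> v' = SE x"
    and R: "\<And>y. y \<in> T \<Longrightarrow> column y = column v + 1 \<Longrightarrow> y = NE v' \<or> y = SE v'"
  shows "pth (insert v' (T - {v}))"
proof (rule pthI)
  let ?T = "insert v' (T - {v})"
  show "finite ?T" using pth_fin[OF p] by simp
  show "?T \<noteq> {}" by simp
  show "valid_node x" if "x \<in> ?T" for x using that vv pth_valid[OF p, of x] by blast
  show "x = y" if "x \<in> ?T" "y \<in> ?T" "column x = column y" for x y
  proof (cases "x = v' \<or> y = v'")
    case True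
    have X: "x = v' \<or> (x \<in> T \<and> x \<noteq> v)" "y = v' \<or> (y \<in> T \<and> y \<noteq> v)" using that(1,2) by blast+
    show ?thesis
    proof (rule ccontr)
      assume ne: "x \<noteq> y"
      then have "(x = v' \<and> y \<in> T \<and> y \<noteq> v) \<or> (y = v' \<and> x \<in> T \<and> x \<noteq> v)" using X True by blast
      then show False using pth_colinj[OF p _ v] cv that(3) by metis
    qed
  next
    case False
    then have "x \<in> T" "y \<in> T" using that(1,2) by blast+
    then show ?thesis using pth_colinj[OF p] that(3) by blast
  qed
  show "\<exists>z\<in>?T. column z = c" if a: "x \<in> ?T" "y \<in> ?T" "column x \<le> c" "c \<le> column y" for x y c
  proof -
    define x1 where "x1 = (if x = v' then v else x)"
    define y1 where "y1 = (if y = v' then v else y)"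
    have "x1 \<in> T" "y1 \<in> T" "column x1 = column x" "column y1 = column y"
      using a(1,2) v cv unfolding x1_def y1_def by auto
    then obtain z where "z \<in> T" "column z = c" using pth_itv[OF p, of x1 y1 c] a by auto
    then show ?thesis using v cv by (cases "z = v") auto
  qed
  show "y = NE x \<or> y = SE x" if a: "x \<in> ?T" "y \<in> ?T" "column y = column x + 1" for x y
  proof -
    consider "x = v'" | "y = v'" | "x \<in> T" "y \<in> T" "x \<noteq> v'" "y \<noteq> v'" using a by blast
    then show ?thesis
    proof cases
      case 1
      then have "y \<noteq> v'" using a by auto
      then have "y \<in> T" using a by blast
      then show ?thesis using R 1 a cv by auto
    next
      case 2
      then have "x \<noteq> v'" using a by auto
      then have "x \<in> T" using a by blast
      then show ?thesis using L 2 a cv by auto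
    next
      case 3 then show ?thesis using pth_adj[OF p] a by blast
    qed
  qed
qed

lemma start_replace:
  assumes p: "pth T" and v: "v \<in> T" "v \<noteq> tile_start T" and cv: "column v' = column v"
    and p2: "pth (insert v' (T - {v}))"
  shows "tile_start (insert v' (T - {v})) = tile_start T"
proof (rule start_char[OF p2])
  have s: "tile_start T \<in> T" "\<forall>y\<in>T. column (tile_start T) \<le> column y" using start_prop[OF p] by auto
  show "tile_start T \<in> insert v' (T - {v})" using s v by auto
  show "\<forall>y\<in>insert v' (T - {v}). column (tile_start T) \<le> column y" using s v cv by auto
qed

lemma end_replace:
  assumes p: "pth T" and v: "v \<in> T" "v \<noteq> tile_end T" and cv: "column v' = column v"
    and p2: "pth (insert v' (T - {v}))"
  shows "tile_end (insert v' (T - {v})) = tile_end T"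
proof (rule end_char[OF p2])
  have s: "tile_end T \<in> T" "\<forall>y\<in>T. column y \<le> column (tile_end T)" using end_prop[OF p] by auto
  show "tile_end T \<in> insert v' (T - {v})" using s v by auto
  show "\<forall>y\<in>insert v' (T - {v}). column y \<le> column (tile_end T)" using s v cv by auto
qed

lemma Mx_eqI: "pth T \<Longrightarrow> x \<in> T \<Longrightarrow> height x = h \<Longrightarrow> (\<And>y. y \<in> T \<Longrightarrow> height y \<le> h) \<Longrightarrow> Mx T = h"
  unfolding Mx_def using pth_fin
  by (metis (mono_tags, lifting) Max_eqI finite_imageI imageE imageI)

lemma dy_replace:
  assumes d: "dy T" and v: "v \<in> T" "v \<noteq> tile_start T" "v \<noteq> tile_end T" and cv: "column v' = column v"
    and vv: "valid_node v'" and h: "height v' \<le> Mx T"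
    and L: "\<And>x. x \<in> T \<Longrightarrow> column x = column v - 1 \<Longrightarrow> v' = NE x \<or> v' = SE x"
    and R: "\<And>y. y \<in> T \<Longrightarrow> column y = column v + 1 \<Longrightarrow> y = NE v' \<or> y = SE v'"
  shows "dy (insert v' (T - {v})) \<and> Mx (insert v' (T - {v})) = Mx T"
proof -
  have p: "pth T" using d unfolding dy_def by blast
  have p2: "pth (insert v' (T - {v}))" by (rule pth_replace[OF p v(1) cv vv L R])
  have s: "tile_start (insert v' (T - {v})) = tile_start T" by (rule start_replace[OF p v(1,2) cv p2])
  have e: "tile_end (insert v' (T - {v})) = tile_end T" by (rule end_replace[OF p v(1,3) cv p2])
  have sT: "tile_start T \<in> insert v' (T - {v})" using start_prop[OF p] v by auto
  have M: "Mx (insert v' (T - {v})) = Mx T"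
    by (rule Mx_eqI[OF p2 sT]) (use d h Mx_ge[OF p] in \<open>auto simp: dy_def\<close>)
  show ?thesis using d p2 s e M unfolding dy_def by simp
qed

lemma pth_sub:
  assumes p: "pth T" and S: "S \<subseteq> T" "S \<noteq> {}"
    and cl: "\<And>x y z. x \<in> S \<Longrightarrow> y \<in> S \<Longrightarrow> z \<in> T \<Longrightarrow> column x \<le> column z \<Longrightarrow> column z \<le> column y \<Longrightarrow> z \<in> S"
  shows "pth S"
proof (rule pthI)
  show "finite S" using pth_fin[OF p] S finite_subset by blast
  show "S \<noteq> {}" by fact
  show "valid_node x" if "x \<in> S" for x using that S pth_valid[OF p] by blast
  show "x = y" if "x \<in> S" "y \<in> S" "column x = column y" for x y using that S pth_colinj[OF p] by blast
  show "\<exists>z\<in>S. column z = c" if a: "x \<in> S" "y \<in> S" "column x \<le> c" "c \<le> column y" for x y c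
  proof -
    obtain z where "z \<in> T" "column z = c" using pth_itv[OF p, of x y c] a S by blast
    then show ?thesis using cl[of x y z] a by blast
  qed
  show "y = NE x \<or> y = SE x" if "x \<in> S" "y \<in> S" "column y = column x + 1" for x y
    using that S pth_adj[OF p] by blast
qed

lemma pth_merge:
  assumes pL: "pth TL" and pR: "pth TR" and vc: "valid_node c"
    and cL: "\<And>x. x \<in> TL \<Longrightarrow> column x < column c" and cR: "\<And>x. x \<in> TR \<Longrightarrow> column c < column x"
    and eL: "column (tile_end TL) = column c - 1" and sR: "column (tile_start TR) = column c + 1"
    and aL: "c = NE (tile_end TL) \<or> c = SE (tile_end TL)"
    and aR: "tile_start TR = NE c \<or> tile_start TR = SE c"
  shows "pth (TL \<union> {c} \<union> TR)"
proof (rule pthI)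
  let ?M = "TL \<union> {c} \<union> TR"
  have EL: "tile_end TL \<in> TL" "\<And>y. y \<in> TL \<Longrightarrow> column y \<le> column (tile_end TL)" using end_prop[OF pL] by auto
  have SL: "tile_start TL \<in> TL" "\<And>y. y \<in> TL \<Longrightarrow> column (tile_start TL) \<le> column y" using start_prop[OF pL] by auto
  have SR: "tile_start TR \<in> TR" "\<And>y. y \<in> TR \<Longrightarrow> column (tile_start TR) \<le> column y" using start_prop[OF pR] by auto
  have ER: "tile_end TR \<in> TR" "\<And>y. y \<in> TR \<Longrightarrow> column y \<le> column (tile_end TR)" using end_prop[OF pR] by auto
  show "finite ?M" using pth_fin[OF pL] pth_fin[OF pR] by simp
  show "?M \<noteq> {}" by simp
  show "valid_node x" if "x \<in> ?M" for x using that vc pth_valid[OF pL] pth_valid[OF pR] by blast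
  show "x = y" if "x \<in> ?M" "y \<in> ?M" "column x = column y" for x y
    using that pth_colinj[OF pL] pth_colinj[OF pR] cL cR by (metis Un_iff less_irrefl order.strict_trans singletonD)
  have colset: "\<exists>z\<in>?M. column z = c'" if a: "column (tile_start TL) \<le> c'" "c' \<le> column (tile_end TR)" for c'
  proof -
    consider "c' < column c" | "c' = column c" | "c' > column c" by linarith
    then show ?thesis
    proof cases
      case 1
      then obtain z where "z \<in> TL" "column z = c'" using pth_itv[OF pL SL(1) EL(1), of c'] a eL 1 by force
      then show ?thesis by blast
    next
      case 2 then show ?thesis by blast
    next
      case 3
      then obtain z where "z \<in> TR" "column z = c'" using pth_itv[OF pR SR(1) ER(1), of c'] a sR 3 by force
      then show ?thesis by blast
    qed
  qed
  have b1: "column (tile_start TL) \<le> column (tile_end TL)" using SL(1) EL(2) by simp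
  have b2: "column (tile_start TR) \<le> column (tile_end TR)" using SR(1) ER(2) by simp
  have bnd: "column (tile_start TL) \<le> column z \<and> column z \<le> column (tile_end TR)" if a: "z \<in> ?M" for z
  proof -
    consider "z \<in> TL" | "z = c" | "z \<in> TR" using a by blast
    then show ?thesis
    proof cases
      case 1 then show ?thesis using SL(2)[of z] EL(2)[of z] eL sR b2 by linarith
    next
      case 2 then show ?thesis using b1 b2 eL sR by simp
    next
      case 3 then show ?thesis using SR(2)[of z] ER(2)[of z] eL sR b1 by linarith
    qed
  qed
  show "\<exists>z\<in>?M. column z = c'" if "x \<in> ?M" "y \<in> ?M" "column x \<le> c'" "c' \<le> column y" for x y c'
    using colset bnd[OF that(1)] bnd[OF that(2)] that(3,4) by auto
  show "y = NE x \<or> y = SE x" if a: "x \<in> ?M" "y \<in> ?M" "column y = column x + 1" for x y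
  proof -
    consider "x \<in> TL" "y \<in> TL" | "x \<in> TL" "y = c" | "x = c" "y \<in> TR" | "x \<in> TR" "y \<in> TR"
      | "x \<in> TL" "y \<in> TR" | "x = c" "y \<in> TL" | "x \<in> TR" "y \<notin> TR" | "x = c" "y = c"
      using a by blast
    then show ?thesis
    proof cases
      case 1 then show ?thesis using pth_adj[OF pL] a(3) by blast
    next
      case 2
      then have "x = tile_end TL" using pth_colinj[OF pL] EL a eL by simp
      then show ?thesis using aL 2 by simp
    next
      case 3
      then have "y = tile_start TR" using pth_colinj[OF pR] SR a sR by simp
      then show ?thesis using aR 3 by simp
    next
      case 4 then show ?thesis using pth_adj[OF pR] a by blast
    next
      case 5
      then have "column x \<le> column c - 1" "column c + 1 \<le> column y" using EL eL SR sR by auto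
      then show ?thesis using a by simp
    next
      case 6 then show ?thesis using cL a by fastforce
    next
      case 7 then have "y \<in> TL \<or> y = c" using a by blast
      then show ?thesis using cL cR 7 a by fastforce
    next
      case 8 then show ?thesis using a by simp
    qed
  qed
qed



lemma t_dy: "tiling E P \<Longrightarrow> T \<in> P \<Longrightarrow> dy T"
  unfolding tiling_def dy_dyck by blast

lemma tilingI: "(\<And>T. T \<in> P \<Longrightarrow> dy T) \<Longrightarrow> \<Union>P = E \<Longrightarrow> (\<And>T T'. T \<in> P \<Longrightarrow> T' \<in> P \<Longrightarrow> T \<noteq> T' \<Longrightarrow> T \<inter> T' = {})
  \<Longrightarrow> tiling E P"
  unfolding tiling_def dy_dyck by blast

lemma t_disj2: "tiling E P \<Longrightarrow> T \<in> P \<Longrightarrow> T' \<in> P \<Longrightarrow> T \<noteq> T' \<Longrightarrow> T \<inter> T' = {}"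
  unfolding tiling_def by blast

lemma lnkI: "S \<in> P \<Longrightarrow> u \<in> S \<Longrightarrow> v \<in> S \<Longrightarrow> column v = column u + 1 \<Longrightarrow> lnk P u v"
  unfolding lnk_def by blast

lemma tiling_image:
  assumes tl: "tiling E P" and inj: "inj_on g E" and d: "\<And>T. T \<in> P \<Longrightarrow> dy (g ` T)"
  shows "tiling (g ` E) ((`) g ` P)"
  unfolding tiling_def dy_dyck
proof (intro conjI ballI impI)
  fix T assume "T \<in> (`) g ` P" then show "dy T" using d by blast
next
  show "\<Union> ((`) g ` P) = g ` E" using t_union[OF tl] by blast
next
  fix T1 T2 assume a: "T1 \<in> (`) g ` P" "T2 \<in> (`) g ` P" "T1 \<noteq> T2"
  then obtain S1 S2 where s: "S1 \<in> P" "S2 \<in> P" "T1 = g ` S1" "T2 = g ` S2" by blast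
  then have "S1 \<noteq> S2" using a by blast
  then have "S1 \<inter> S2 = {}" using tl s unfolding tiling_def by blast
  moreover have "S1 \<subseteq> E" "S2 \<subseteq> E" using t_sub[OF tl] s by auto
  ultimately show "T1 \<inter> T2 = {}" using inj_on_image_Int[OF inj, of S1 S2] s by simp
qed

lemma lnk_image:
  assumes cg: "\<And>x. column (g x) = column x"
  shows "lnk ((`) g ` P) u v \<longleftrightarrow> (\<exists>x y. lnk P x y \<and> u = g x \<and> v = g y)"
proof
  assume "lnk ((`) g ` P) u v"
  then obtain T where "T \<in> P" "u \<in> g ` T" "v \<in> g ` T" "column v = column u + 1" unfolding lnk_def by blast
  then obtain x y where xy: "x \<in> T" "y \<in> T" "u = g x" "v = g y" by blast
  then have "lnk P x y" unfolding lnk_def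
    using \<open>T \<in> P\<close> \<open>column v = column u + 1\<close> cg by auto
  then show "\<exists>x y. lnk P x y \<and> u = g x \<and> v = g y" using xy by blast
next
  assume "\<exists>x y. lnk P x y \<and> u = g x \<and> v = g y"
  then obtain x y where xy: "lnk P x y" "u = g x" "v = g y" by blast
  from xy(1) obtain T where T: "T \<in> P" "x \<in> T" "y \<in> T" "column y = column x + 1"
    unfolding lnk_def by blast
  have "g ` T \<in> (`) g ` P" using T(1) by (rule imageI)
  moreover have "u \<in> g ` T" "v \<in> g ` T" using T xy by auto
  moreover have "column v = column u + 1" using T(4) xy cg by simp
  ultimately show "lnk ((`) g ` P) u v" unfolding lnk_def by blast
qed

definition spl :: "node set set \<Rightarrow> node \<Rightarrow> node set set" where
  "spl P c = insert {x\<in>tile_of P c. column x < column c}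
     (insert {x\<in>tile_of P c. column c < column x} (P - {tile_of P c}))"

definition mrg :: "node set set \<Rightarrow> node \<Rightarrow> node \<Rightarrow> node \<Rightarrow> node set set" where
  "mrg Q c a b = insert (tile_of Q a \<union> {c} \<union> tile_of Q b) (Q - {tile_of Q a, tile_of Q b})"

context
  fixes E P c assumes tl: "tiling E P" and cE: "c \<in> E"
    and dL: "dy {x\<in>tile_of P c. column x < column c}" and dR: "dy {x\<in>tile_of P c. column c < column x}"
begin

lemma spl_tiling: "tiling (E - {c}) (spl P c)"
proof -
  let ?T = "tile_of P c"
  let ?L = "{x\<in>?T. column x < column c}" and ?R = "{x\<in>?T. column c < column x}"
  have T: "?T \<in> P" "c \<in> ?T" using tile_of_in[OF tl cE] by auto
  have pT: "pth ?T" using t_pth[OF tl T(1)] .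
  have TLR: "?T - {c} = ?L \<union> ?R"
  proof
    show "?T - {c} \<subseteq> ?L \<union> ?R"
    proof
      fix x assume "x \<in> ?T - {c}"
      then have "column x \<noteq> column c" using pth_colinj[OF pT _ T(2)] by blast
      then show "x \<in> ?L \<union> ?R" using \<open>x \<in> ?T - {c}\<close> by auto
    qed
  qed auto
  have U: "\<Union>(P - {?T}) = E - ?T"
  proof
    show "\<Union>(P - {?T}) \<subseteq> E - ?T" using t_sub[OF tl] t_disj[OF tl T(1)] by blast
    show "E - ?T \<subseteq> \<Union>(P - {?T})" using t_union[OF tl] by blast
  qed
  show ?thesis unfolding spl_def
  proof (rule tilingI)
    fix S assume "S \<in> insert ?L (insert ?R (P - {?T}))"
    then consider "S = ?L" | "S = ?R" | "S \<in> P" by blast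
    then show "dy S" using dL dR t_dy[OF tl] by cases auto
  next
    have "?T \<subseteq> E" using t_sub[OF tl T(1)] .
    have "\<Union> (insert ?L (insert ?R (P - {?T}))) = (?L \<union> ?R) \<union> \<Union>(P - {?T})" by (simp only: Union_insert Un_assoc)
    also have "\<dots> = (?T - {c}) \<union> (E - ?T)" by (simp only: TLR U)
    also have "\<dots> = E - {c}" using \<open>?T \<subseteq> E\<close> T(2) by blast
    finally show "\<Union> (insert ?L (insert ?R (P - {?T}))) = E - {c}" .
  next
    fix S1 S2 assume a: "S1 \<in> insert ?L (insert ?R (P - {?T}))" "S2 \<in> insert ?L (insert ?R (P - {?T}))" "S1 \<noteq> S2"
    have dj: "S \<inter> ?T = {}" if "S \<in> P - {?T}" for S using t_disj2[OF tl _ T(1)] that by blast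
    have lr: "?L \<inter> ?R = {}" by auto
    have sub: "?L \<subseteq> ?T" "?R \<subseteq> ?T" by auto
    have h: "?L \<inter> S = {} \<and> ?R \<inter> S = {}" if "S \<in> P - {?T}" for S
      using dj[OF that] sub by blast
    consider "S1 = ?L" | "S1 = ?R" | "S1 \<in> P - {?T}" using a(1) by blast
    then show "S1 \<inter> S2 = {}"
    proof cases
      case 1
      consider "S2 = ?R" | "S2 \<in> P - {?T}" using a(2,3) 1 by blast
      then show ?thesis using 1 lr h by cases auto
    next
      case 2
      consider "S2 = ?L" | "S2 \<in> P - {?T}" using a(2,3) 2 by blast
      then show ?thesis using 2 lr h by cases auto
    next
      case 3
      consider "S2 = ?L" | "S2 = ?R" | "S2 \<in> P - {?T}" using a(2) by blast
      then show ?thesis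
      proof cases
        case 1 then show ?thesis using h[OF 3] by blast
      next
        case 2 then show ?thesis using h[OF 3] by blast
      next
        case c: 3 then show ?thesis using t_disj2[OF tl, of S1 S2] 3 a(3) by blast
      qed
    qed
  qed
qed

lemma lnk_spl: "lnk (spl P c) u v \<longleftrightarrow> lnk P u v \<and> u \<noteq> c \<and> v \<noteq> c"
proof -
  let ?T = "tile_of P c"
  let ?L = "{x\<in>?T. column x < column c}" and ?R = "{x\<in>?T. column c < column x}"
  have T: "?T \<in> P" "c \<in> ?T" using tile_of_in[OF tl cE] by auto
  have pT: "pth ?T" using t_pth[OF tl T(1)] .
  show ?thesis
  proof
    assume "lnk (spl P c) u v"
    then obtain S where S: "S \<in> insert ?L (insert ?R (P - {?T}))" "u \<in> S" "v \<in> S" "column v = column u + 1"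
      unfolding lnk_def spl_def by blast
    consider "S = ?L" | "S = ?R" | "S \<in> P" "S \<noteq> ?T" using S(1) by blast
    then show "lnk P u v \<and> u \<noteq> c \<and> v \<noteq> c"
    proof cases
      case 1
      then have "u \<in> ?T" "v \<in> ?T" "column u < column c" "column v < column c" using S(2,3) by auto
      then show ?thesis using S(4) T(1) unfolding lnk_def by auto
    next
      case 2
      then have "u \<in> ?T" "v \<in> ?T" "column c < column v" "column c < column u" using S(2,3) by auto
      then show ?thesis using S(4) T(1) unfolding lnk_def by auto
    next
      case 3
      have "c \<notin> S"
      proof
        assume "c \<in> S"
        from t_disj[OF tl 3(1) T(1) this T(2)] 3(2) show False by simp
      qed
      then have "u \<noteq> c" "v \<noteq> c" using S(2,3) by blast+
      moreover have "lnk P u v" unfolding lnk_def using S(2,3,4) 3(1) by blast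
      ultimately show ?thesis by blast
    qed
  next
    assume a: "lnk P u v \<and> u \<noteq> c \<and> v \<noteq> c"
    then obtain S where S: "S \<in> P" "u \<in> S" "v \<in> S" "column v = column u + 1" unfolding lnk_def by blast
    show "lnk (spl P c) u v"
    proof (cases "S = ?T")
      case True
      have "column v \<noteq> column c" using pth_colinj[OF pT _ T(2), of v] S True a by blast
      moreover have "column u \<noteq> column c" using pth_colinj[OF pT _ T(2), of u] S True a by blast
      moreover have uv: "u \<in> ?T" "v \<in> ?T" using S(2,3) True by auto
      ultimately have "(u \<in> ?L \<and> v \<in> ?L) \<or> (u \<in> ?R \<and> v \<in> ?R)"
        using S(4) by (cases "column u < column c") auto
      moreover have "?L \<in> spl P c" unfolding spl_def by (rule insertI1)
      moreover have "?R \<in> spl P c" unfolding spl_def by (rule insertI2, rule insertI1)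
      ultimately show ?thesis using lnkI[of _ "spl P c" u v] S(4) by blast
    next
      case False
      then have SP: "S \<in> P - {?T}" using S(1) by blast
      have "S \<in> spl P c" unfolding spl_def by (rule insertI2, rule insertI2, rule SP)
      then show ?thesis using lnkI S(2,3,4) by blast
    qed
  qed
qed

end

context
  fixes E Q c a b assumes tl: "tiling E Q" and cE: "c \<notin> E" and aE: "a \<in> E" and bE: "b \<in> E"
    and ne: "tile_of Q a \<noteq> tile_of Q b"
    and dM: "dy (tile_of Q a \<union> {c} \<union> tile_of Q b)"
begin

lemma mrg_tiling: "tiling (insert c E) (mrg Q c a b)"
proof -
  let ?A = "tile_of Q a" and ?B = "tile_of Q b"
  have A: "?A \<in> Q" "a \<in> ?A" using tile_of_in[OF tl aE] by auto
  have B: "?B \<in> Q" "b \<in> ?B" using tile_of_in[OF tl bE] by auto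
  show ?thesis unfolding mrg_def
  proof (rule tilingI)
    fix S assume "S \<in> insert (?A \<union> {c} \<union> ?B) (Q - {?A, ?B})"
    then consider "S = ?A \<union> {c} \<union> ?B" | "S \<in> Q" by blast
    then show "dy S" using dM t_dy[OF tl] by cases auto
  next
    show "\<Union> (insert (?A \<union> {c} \<union> ?B) (Q - {?A, ?B})) = insert c E"
      using t_union[OF tl] A B by blast
  next
    fix S1 S2 assume a: "S1 \<in> insert (?A \<union> {c} \<union> ?B) (Q - {?A, ?B})" "S2 \<in> insert (?A \<union> {c} \<union> ?B) (Q - {?A, ?B})" "S1 \<noteq> S2"
    have dj: "S \<inter> (?A \<union> {c} \<union> ?B) = {}" if "S \<in> Q - {?A, ?B}" for S
    proof -
      have "S \<inter> ?A = {}" "S \<inter> ?B = {}" using t_disj2[OF tl] that A B by blast+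
      moreover have "c \<notin> S" using that t_sub[OF tl] cE by blast
      ultimately show ?thesis by blast
    qed
    show "S1 \<inter> S2 = {}" using a dj t_disj2[OF tl] by blast
  qed
qed

lemma lnk_mrg:
  assumes cA: "\<And>x. x \<in> tile_of Q a \<Longrightarrow> column x < column c" and cB: "\<And>x. x \<in> tile_of Q b \<Longrightarrow> column c < column x"
    and ca: "column a = column c - 1" and cb: "column b = column c + 1"
  shows "lnk (mrg Q c a b) u v \<longleftrightarrow> lnk Q u v \<or> (u = a \<and> v = c) \<or> (u = c \<and> v = b)"
proof -
  let ?A = "tile_of Q a" and ?B = "tile_of Q b"
  have A: "?A \<in> Q" "a \<in> ?A" using tile_of_in[OF tl aE] by auto
  have B: "?B \<in> Q" "b \<in> ?B" using tile_of_in[OF tl bE] by auto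
  have pA: "pth ?A" using t_pth[OF tl A(1)] .
  have pB: "pth ?B" using t_pth[OF tl B(1)] .
  show ?thesis
  proof
    assume "lnk (mrg Q c a b) u v"
    then obtain S where S: "S \<in> insert (?A \<union> {c} \<union> ?B) (Q - {?A, ?B})" "u \<in> S" "v \<in> S" "column v = column u + 1"
      unfolding lnk_def mrg_def by blast
    show "lnk Q u v \<or> (u = a \<and> v = c) \<or> (u = c \<and> v = b)"
    proof (cases "S = ?A \<union> {c} \<union> ?B")
      case False
      then show ?thesis using S unfolding lnk_def by blast
    next
      case True
      consider "u \<in> ?A" "v \<in> ?A" | "u \<in> ?B" "v \<in> ?B" | "u \<in> ?A" "v = c" | "u = c" "v \<in> ?B"
        | "u \<in> ?A" "v \<in> ?B" | "u = c" "v \<in> ?A" | "u \<in> ?B" "v \<in> ?A" | "u \<in> ?B" "v = c" | "u = c" "v = c"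
        using S True by blast
      then show ?thesis
      proof cases
        case 1 then show ?thesis using A S unfolding lnk_def by blast
      next
        case 2 then show ?thesis using B S unfolding lnk_def by blast
      next
        case 3
        then have "u = a" using pth_colinj[OF pA _ A(2), of u] S(4) ca by simp
        then show ?thesis using 3 by blast
      next
        case 4
        then have "v = b" using pth_colinj[OF pB _ B(2), of v] S(4) cb by simp
        then show ?thesis using 4 by blast
      next
        case 5 then show ?thesis using cA[of u] cB[of v] S(4) by simp
      next
        case 6 then show ?thesis using cA[of v] S(4) by simp
      next
        case 7 then show ?thesis using cA[of v] cB[of u] S(4) by simp
      next
        case 8 then show ?thesis using cB[of u] S(4) by simp
      next
        case 9 then show ?thesis using S(4) by simp
      qed
    qed
  next
    assume h: "lnk Q u v \<or> (u = a \<and> v = c) \<or> (u = c \<and> v = b)"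
    show "lnk (mrg Q c a b) u v"
    proof (cases "lnk Q u v")
      case True
      then obtain S where S: "S \<in> Q" "u \<in> S" "v \<in> S" "column v = column u + 1" unfolding lnk_def by blast
      have MM: "?A \<union> {c} \<union> ?B \<in> mrg Q c a b" unfolding mrg_def by (rule insertI1)
      show ?thesis
      proof (cases "S = ?A \<or> S = ?B")
        case True
        then have "u \<in> ?A \<union> {c} \<union> ?B" "v \<in> ?A \<union> {c} \<union> ?B" using S(2,3) by blast+
        then show ?thesis using lnkI[OF MM] S(4) by blast
      next
        case False
        then have SP: "S \<in> Q - {?A, ?B}" using S(1) by blast
        have "S \<in> mrg Q c a b" unfolding mrg_def by (rule insertI2, rule SP)
        then show ?thesis using lnkI S(2,3,4) by blast
      qed
    next
      case False
      have MM: "?A \<union> {c} \<union> ?B \<in> mrg Q c a b" unfolding mrg_def by (rule insertI1)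
      have "(u = a \<and> v = c) \<or> (u = c \<and> v = b)" using h False by blast
      then show ?thesis
      proof
        assume "u = a \<and> v = c"
        then show ?thesis using lnkI[OF MM, of u v] A(2) ca by simp
      next
        assume "u = c \<and> v = b"
        then show ?thesis using lnkI[OF MM, of u v] B(2) cb by simp
      qed
    qed
  qed
qed

end



definition up :: "node \<Rightarrow> node" where "up x = (fst x + 1, snd x + 1)"
definition dn :: "node \<Rightarrow> node" where "dn x = (fst x - 1, snd x - 1)"

lemma up_SW: "up (SW x) = UL x" by (simp add: up_def nds)
lemma SW_up: "SW (up x) = UL x" by (simp add: up_def nds)
lemma UL_up: "UL (up x) = up (UL x)" by (simp add: up_def nds)
lemma NE_UL: "NE (UL x) = up x" by (simp add: up_def nds)
lemma SE_UL: "SE (UL x) = x" by (simp add: nds)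
lemma SW_ne_UL: "SW x \<noteq> UL x" by (simp add: nds prod_eq_iff)
lemma col_up[simp]: "column (up x) = column x" by (simp add: up_def nds)
lemma col_dn[simp]: "column (dn x) = column x" by (simp add: dn_def nds)
lemma ht_up[simp]: "height (up x) = height x + 2" by (simp add: up_def nds)
lemma ht_dn[simp]: "height (dn x) = height x - 2" by (simp add: dn_def nds)
lemma ht_UL[simp]: "height (UL x) = height x + 1" by (simp add: nds)
lemma ht_SW[simp]: "height (SW x) = height x - 1" by (simp add: nds)
lemma ht_NE[simp]: "height (NE x) = height x + 1" by (simp add: nds)
lemma ht_SE[simp]: "height (SE x) = height x - 1" by (simp add: nds)
lemma col_UL[simp]: "column (UL x) = column x - 1" by (simp add: nds)
lemma col_SW[simp]: "column (SW x) = column x - 1" by (simp add: nds)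
lemma col_NE[simp]: "column (NE x) = column x + 1" by (simp add: nds)
lemma col_SE[simp]: "column (SE x) = column x + 1" by (simp add: nds)
lemma dn_up[simp]: "dn (up x) = x" by (simp add: up_def dn_def)
lemma up_dn[simp]: "up (dn x) = x" by (simp add: up_def dn_def)

context
  fixes E P assumes tl: "tiling E P" and lc: "loc E P" and cv: "cvx E"
begin

lemma lemV:
  assumes T: "T \<in> P" and T': "T' \<in> P" "T \<noteq> T'" and H: "Mx T \<le> H" "H + 2 \<le> Mx T'"
  shows "nat (column x - column (tile_start T)) = n \<Longrightarrow> x \<in> T \<Longrightarrow> up x \<in> T' \<Longrightarrow> False"
proof (induction n arbitrary: x rule: less_induct)
  case (less n)
  have pT: "pth T" using t_pth[OF tl T] .
  have pT': "pth T'" using t_pth[OF tl T'(1)] .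
  have xE: "x \<in> E" using t_sub[OF tl T] less.prems(2) by blast
  have uE: "up x \<in> E" using t_sub[OF tl T'(1)] less.prems(3) by blast
  have ULE: "UL x \<in> E" by (rule cvxD[OF cv xE uE]) (auto simp: up_def UL_def)
  obtain w where w: "lnk P w x" using has_pred[OF tl lc cv xE ULE] by blast
  have wT: "w \<in> T" using lnk_same[OF tl w T less.prems(2)] .
  have cw: "column w = column x - 1" using lnk_D[OF tl w] by simp
  have cs: "column (tile_start T) \<le> column w" using start_prop[OF pT] wT by blast
  have m: "nat (column w - column (tile_start T)) < n" using less.prems(1) cw cs by simp
  have "w = SW x \<or> w = UL x" by (rule pred_cases[OF tl lc cv w])
  then show False
  proof
    assume wS: "w = SW x"
    have "NE (UL x) \<in> E" using uE NE_UL by simp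
    then obtain y where y: "lnk P (UL x) y" using has_succ[OF tl lc cv ULE] by blast
    have "y = NE (UL x) \<or> y = SE (UL x)" using lnk_D[OF tl y] by blast
    moreover have "y \<noteq> x"
    proof
      assume "y = x"
      then have "UL x = w" using lnk_inj[OF tl y[unfolded \<open>y = x\<close>] w] by simp
      then show False using wS SW_ne_UL by metis
    qed
    ultimately have "y = up x" using NE_UL SE_UL by metis
    then have "UL x \<in> T'" using lnk_same[OF tl y T'(1)] less.prems(3) by simp
    then have "up w \<in> T'" using wS up_SW by simp
    then show False using less.IH[OF m refl wT] by blast
  next
    assume wU: "w = UL x"
    have hw: "height w \<le> H" using Mx_ge[OF pT wT] H(1) by simp
    have "column (tile_start T') < column (up x)"
    proof (rule ccontr)
      assume "\<not> column (tile_start T') < column (up x)"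
      moreover have "column (tile_start T') \<le> column (up x)" using start_prop[OF pT'] less.prems(3) by blast
      ultimately have "column (tile_start T') = column (up x)" by simp
      then have "tile_start T' = up x" using pth_colinj[OF pT'] start_prop[OF pT'] less.prems(3) by blast
      then have "height (up x) = Mx T'" using t_dyck[OF tl T'(1)] by simp
      then show False using hw wU H(2) by simp
    qed
    then obtain w' where w': "w' \<in> T'" "lnk P w' (up x)" using pred_ex[OF tl T'(1) less.prems(3)] by blast
    have "w' = SW (up x) \<or> w' = UL (up x)" by (rule pred_cases[OF tl lc cv w'(2)])
    moreover have "w' \<noteq> SW (up x)"
    proof
      assume "w' = SW (up x)"
      then have "w \<in> T'" using w'(1) wU SW_up by simp
      then have "T = T'" using t_disj[OF tl T T'(1) wT] by simp
      then show False using T'(2) by simp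
    qed
    ultimately have "up w \<in> T'" using w'(1) wU UL_up by simp
    then show False using less.IH[OF m refl wT] by blast
  qed
qed

end

lemma mrg_spl:
  assumes tl: "tiling E P" and cE: "c \<in> E"
    and dL: "dy {x\<in>tile_of P c. column x < column c}" and dR: "dy {x\<in>tile_of P c. column c < column x}"
    and a: "a \<in> {x\<in>tile_of P c. column x < column c}" and b: "b \<in> {x\<in>tile_of P c. column c < column x}"
  shows "mrg (spl P c) c a b = P"
proof -
  let ?T = "tile_of P c"
  let ?L = "{x\<in>?T. column x < column c}" and ?R = "{x\<in>?T. column c < column x}"
  have T: "?T \<in> P" "c \<in> ?T" using tile_of_in[OF tl cE] by auto
  have pT: "pth ?T" using t_pth[OF tl T(1)] .
  have tl2: "tiling (E - {c}) (spl P c)" by (rule spl_tiling[OF tl cE dL dR])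
  have Lin: "?L \<in> spl P c" unfolding spl_def by (rule insertI1)
  have Rin: "?R \<in> spl P c" unfolding spl_def by (rule insertI2, rule insertI1)
  have ta: "tile_of (spl P c) a = ?L" by (rule tile_of_eq[OF tl2 Lin a])
  have tb: "tile_of (spl P c) b = ?R" by (rule tile_of_eq[OF tl2 Rin b])
  have TLR: "?L \<union> {c} \<union> ?R = ?T"
  proof
    show "?T \<subseteq> ?L \<union> {c} \<union> ?R"
    proof
      fix x assume x: "x \<in> ?T"
      show "x \<in> ?L \<union> {c} \<union> ?R"
      proof (cases "column x = column c")
        case True then have "x = c" using pth_colinj[OF pT x T(2)] by simp
        then show ?thesis by blast
      next
        case False then show ?thesis using x by auto
      qed
    qed
    show "?L \<union> {c} \<union> ?R \<subseteq> ?T" using T(2) by blast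
  qed
  have nL: "?L \<notin> P - {?T}"
  proof
    assume "?L \<in> P - {?T}"
    then have "?L \<inter> ?T = {}" using t_disj2[OF tl _ T(1)] by blast
    then show False using a by blast
  qed
  have nR: "?R \<notin> P - {?T}"
  proof
    assume "?R \<in> P - {?T}"
    then have "?R \<inter> ?T = {}" using t_disj2[OF tl _ T(1)] by blast
    then show False using b by blast
  qed
  have "spl P c - {?L, ?R} = P - {?T}"
  proof -
    have "spl P c - {?L, ?R} = (P - {?T}) - {?L, ?R}" unfolding spl_def by blast
    also have "\<dots> = P - {?T}" using nL nR by blast
    finally show ?thesis .
  qed
  then have "mrg (spl P c) c a b = insert ?T (P - {?T})" unfolding mrg_def ta tb TLR by simp
  also have "\<dots> = P" using T(1) by blast
  finally show ?thesis .
qed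

lemma spl_mrg:
  assumes tl: "tiling E Q" and cE: "c \<notin> E" and aE: "a \<in> E" and bE: "b \<in> E"
    and ne: "tile_of Q a \<noteq> tile_of Q b"
    and dM: "dy (tile_of Q a \<union> {c} \<union> tile_of Q b)"
    and cA: "\<And>x. x \<in> tile_of Q a \<Longrightarrow> column x < column c" and cB: "\<And>x. x \<in> tile_of Q b \<Longrightarrow> column c < column x"
  shows "spl (mrg Q c a b) c = Q"
proof -
  let ?A = "tile_of Q a" and ?B = "tile_of Q b"
  let ?M = "?A \<union> {c} \<union> ?B"
  have A: "?A \<in> Q" "a \<in> ?A" using tile_of_in[OF tl aE] by auto
  have B: "?B \<in> Q" "b \<in> ?B" using tile_of_in[OF tl bE] by auto
  have tl2: "tiling (insert c E) (mrg Q c a b)" by (rule mrg_tiling[OF tl cE aE bE ne dM])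
  have Min: "?M \<in> mrg Q c a b" unfolding mrg_def by (rule insertI1)
  have tc: "tile_of (mrg Q c a b) c = ?M" by (rule tile_of_eq[OF tl2 Min]) blast
  have l: "{x\<in>?M. column x < column c} = ?A"
  proof
    show "{x\<in>?M. column x < column c} \<subseteq> ?A" using cB by fastforce
    show "?A \<subseteq> {x\<in>?M. column x < column c}" using cA by blast
  qed
  have r: "{x\<in>?M. column c < column x} = ?B"
  proof
    show "{x\<in>?M. column c < column x} \<subseteq> ?B" using cA by fastforce
    show "?B \<subseteq> {x\<in>?M. column c < column x}" using cB by blast
  qed
  have nM: "?M \<notin> Q - {?A, ?B}"
  proof
    assume "?M \<in> Q - {?A, ?B}"
    then have "c \<in> E" using t_sub[OF tl] by blast
    then show False using cE by simp
  qed
  have "mrg Q c a b - {?M} = Q - {?A, ?B}" unfolding mrg_def using nM by blast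
  then have "spl (mrg Q c a b) c = insert ?A (insert ?B (Q - {?A, ?B}))"
    unfolding spl_def tc l r by simp
  also have "\<dots> = Q" using A(1) B(1) by blast
  finally show ?thesis .
qed



lemma addable_below:
  assumes "addable S a" "valid_node y" "fst y \<le> fst a" "snd y \<le> snd a" "y \<noteq> a"
  shows "y \<in> S"
proof -
  have p: "is_partition (insert a S)" and v: "valid_node a" using assms(1) unfolding addable_def by auto
  have "a \<in> insert a S" by simp
  then have "y \<in> insert a S" using part_down[OF p, of a y] assms(2-4) unfolding valid_node_def by auto
  then show ?thesis using assms(5) by simp
qed

lemma valid_iff: "valid_node x \<longleftrightarrow> 1 \<le> fst x \<and> 1 \<le> snd x" unfolding valid_node_def ..

locale S =
  fixes lam mu :: "node set" and m :: node and n :: nat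
  assumes plam: "is_partition lam" and pmu: "is_partition mu" and sub: "mu \<subseteq> lam"
    and am: "addable mu m" and al: "addable lam (fst m + int (Suc n), snd m + int (Suc n))"
begin

definition c :: "nat \<Rightarrow> node" where "c t = (fst m + int t, snd m + int t)"
definition D where "D = lam - mu"
definition D1 where "D1 = lam - insert m mu"
definition D2 where "D2 = insert (c (Suc n)) lam - insert m mu"

lemma c0: "c 0 = m" by (simp add: c_def)
lemma c_inj: "c s = c t \<longleftrightarrow> s = t" by (simp add: c_def)
lemma up_c: "up (c t) = c (Suc t)" by (simp add: c_def up_def)
lemma dn_c: "dn (c (Suc t)) = c t" by (simp add: c_def dn_def)
lemma col_c[simp]: "column (c t) = column m" by (simp add: c_def nds)
lemma ht_c: "height (c t) = height m + 2 * int t" by (simp add: c_def nds)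
lemma SW_c: "SW (c (Suc t)) = UL (c t)" by (simp add: c_def nds)
lemma SE_c: "SE (c (Suc t)) = NE (c t)" by (simp add: c_def nds)
lemma NE_SW: "NE (SW x) = x" by (simp add: nds)
lemma UL_SE: "UL (SE x) = x" by (simp add: nds)
lemma SW_SE: "SW (SE x) = dn x" by (simp add: nds dn_def)
lemma SE_SW: "SE (SW x) = dn x" by (simp add: nds dn_def)
lemma SE_up: "SE (up x) = NE x" by (simp add: nds up_def)

lemma m_valid: "valid_node m" using am unfolding addable_def by blast
lemma m_notin: "m \<notin> mu" using am unfolding addable_def by blast
lemma l_notin: "c (Suc n) \<notin> lam" using al unfolding addable_def c_def by blast
lemma l_notmu: "c (Suc n) \<notin> mu" using l_notin sub by blast

lemma mu_down: "x \<in> mu \<Longrightarrow> valid_node y \<Longrightarrow> fst y \<le> fst x \<Longrightarrow> snd y \<le> snd x \<Longrightarrow> y \<in> mu"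
  using part_down[OF pmu, of x y] unfolding valid_node_def by blast

lemma lam_valid: "x \<in> lam \<Longrightarrow> valid_node x" using part_valid[OF plam] unfolding valid_node_def by blast

lemma below_l: "valid_node y \<Longrightarrow> fst y \<le> fst m + int (Suc n) \<Longrightarrow> snd y \<le> snd m + int (Suc n)
   \<Longrightarrow> y \<noteq> c (Suc n) \<Longrightarrow> y \<in> lam"
  using addable_below[OF al, of y] unfolding c_def by auto

lemma above_m: "fst m \<le> fst y \<Longrightarrow> snd m \<le> snd y \<Longrightarrow> y \<notin> mu"
proof
  assume a: "fst m \<le> fst y" "snd m \<le> snd y" "y \<in> mu"
  have "m \<in> mu" by (rule mu_down[OF a(3) m_valid a(1) a(2)])
  then show False using m_notin by simp
qed

lemma inD: "fst m \<le> fst y \<Longrightarrow> snd m \<le> snd y \<Longrightarrow> fst y \<le> fst m + int (Suc n) \<Longrightarrow> snd y \<le> snd m + int (Suc n)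
   \<Longrightarrow> y \<noteq> c (Suc n) \<Longrightarrow> y \<in> D"
proof -
  assume a: "fst m \<le> fst y" "snd m \<le> snd y" "fst y \<le> fst m + int (Suc n)" "snd y \<le> snd m + int (Suc n)"
    "y \<noteq> c (Suc n)"
  have "valid_node y" using m_valid a(1,2) unfolding valid_iff by simp
  then have "y \<in> lam" using below_l a(3,4,5) by blast
  moreover have "y \<notin> mu" using above_m a(1,2) by blast
  ultimately show ?thesis unfolding D_def by blast
qed

lemma cD: "t \<le> n \<Longrightarrow> c t \<in> D"
  by (rule inD) (auto simp: c_def)

lemma ULD: "t \<le> n \<Longrightarrow> UL (c t) \<in> D"
  by (rule inD) (auto simp: c_def UL_def)

lemma NED: "t \<le> n \<Longrightarrow> NE (c t) \<in> D"
  by (rule inD) (auto simp: c_def NE_def)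

lemma SWm: "SW m \<notin> D"
proof
  assume a: "SW m \<in> D"
  then have "valid_node (SW m)" using lam_valid unfolding D_def by blast
  then have "SW m \<in> mu" using addable_below[OF am, of "SW m"] by (simp add: nds prod_eq_iff)
  then show False using a unfolding D_def by blast
qed

lemma SEm: "SE m \<notin> D"
proof
  assume a: "SE m \<in> D"
  then have "valid_node (SE m)" using lam_valid unfolding D_def by blast
  then have "SE m \<in> mu" using addable_below[OF am, of "SE m"] by (simp add: nds prod_eq_iff)
  then show False using a unfolding D_def by blast
qed

lemma UL_ne_m: "x \<in> D \<Longrightarrow> UL x \<noteq> m"
proof
  assume a: "x \<in> D" "UL x = m"
  then have "x = SE m" by (auto simp: nds)
  then show False using a SEm by simp
qed

lemma NE_ne_m: "x \<in> D \<Longrightarrow> NE x \<noteq> m"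
proof
  assume a: "x \<in> D" "NE x = m"
  then have "x = SW m" by (auto simp: nds)
  then show False using a SWm by simp
qed

lemma l_notD: "c (Suc n) \<notin> D" using l_notin unfolding D_def by blast
lemma m_D: "m \<in> D" using cD[of 0] c0 by simp

lemma D1_eq: "D1 = D - {m}" unfolding D1_def D_def by blast
lemma D2_eq: "D2 = insert (c (Suc n)) (D - {m})"
  unfolding D2_def D_def using l_notmu c0 c_inj[of "Suc n" 0] by auto

lemma cvxD: "cvx D" unfolding D_def by (rule cvx_diff[OF plam pmu])
lemma cvxD1: "cvx D1" unfolding D1_def
  by (rule cvx_diff[OF plam]) (use am in \<open>simp add: addable_def\<close>)
lemma cvxD2: "cvx D2" unfolding D2_def
  by (rule cvx_diff) (use am al in \<open>simp_all add: addable_def c_def\<close>)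

lemma valleys:
  assumes tl: "tiling D P" and lc: "loc D P"
  shows "t \<le> n \<Longrightarrow> lnk P (UL (c t)) (c t) \<and> lnk P (c t) (NE (c t))"
proof (induction t)
  case 0
  have e: "c 0 \<in> D" "UL (c 0) \<in> D" "NE (c 0) \<in> D" using cD ULD NED by auto
  obtain w where w: "lnk P w (c 0)" using has_pred[OF tl lc cvxD e(1,2)] by blast
  have "w \<noteq> SW (c 0)" using lnk_D[OF tl w] SWm c0 by auto
  then have "w = UL (c 0)" using pred_cases[OF tl lc cvxD w] by blast
  moreover obtain y where y: "lnk P (c 0) y" using has_succ[OF tl lc cvxD e(1,3)] by blast
  moreover have "y \<noteq> SE (c 0)" using lnk_D[OF tl y] SEm c0 by auto
  then have "y = NE (c 0)" using lnk_D[OF tl y] by blast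
  ultimately show ?case using w y by simp
next
  case (Suc s)
  then have IH: "lnk P (UL (c s)) (c s)" "lnk P (c s) (NE (c s))" by auto
  have e: "c (Suc s) \<in> D" "UL (c (Suc s)) \<in> D" "NE (c (Suc s)) \<in> D" using cD ULD NED Suc.prems by auto
  obtain w where w: "lnk P w (c (Suc s))" using has_pred[OF tl lc cvxD e(1,2)] by blast
  have "w \<noteq> SW (c (Suc s))"
  proof
    assume "w = SW (c (Suc s))"
    then have "lnk P (UL (c s)) (c (Suc s))" using w SW_c by simp
    then have "c s = c (Suc s)" by (rule lnk_fun[OF tl IH(1)])
    then show False using c_inj by simp
  qed
  then have "w = UL (c (Suc s))" using pred_cases[OF tl lc cvxD w] by blast
  moreover obtain y where y: "lnk P (c (Suc s)) y" using has_succ[OF tl lc cvxD e(1,3)] by blast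
  moreover have "y \<noteq> SE (c (Suc s))"
  proof
    assume "y = SE (c (Suc s))"
    then have "lnk P (c (Suc s)) (NE (c s))" using y SE_c by simp
    then have "c (Suc s) = c s" by (rule lnk_inj[OF tl _ IH(2)])
    then show False using c_inj by simp
  qed
  then have "y = NE (c (Suc s))" using lnk_D[OF tl y] by blast
  ultimately show ?case using w y by simp
qed

lemma peaks:
  assumes tl: "tiling E Q" and lc: "loc E Q" and cv: "cvx E" and m0: "m \<notin> E"
    and R: "\<And>t. 1 \<le> t \<Longrightarrow> t \<le> r \<Longrightarrow> c t \<in> E \<and> SW (c t) \<in> E \<and> SE (c t) \<in> E"
  shows "1 \<le> t \<Longrightarrow> t \<le> r \<Longrightarrow> lnk Q (SW (c t)) (c t) \<and> lnk Q (c t) (SE (c t))"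
proof (induction t)
  case 0 then show ?case by simp
next
  case (Suc s)
  have e: "c (Suc s) \<in> E" "SW (c (Suc s)) \<in> E" "SE (c (Suc s)) \<in> E" using R Suc.prems by auto
  have IH: "s \<ge> 1 \<Longrightarrow> lnk Q (SW (c s)) (c s) \<and> lnk Q (c s) (SE (c s))" using Suc by simp
  have "UL (SE (c (Suc s))) \<in> E" using e UL_SE by simp
  then obtain w where w: "lnk Q w (SE (c (Suc s)))" using has_pred[OF tl lc cv e(3)] by blast
  have "w \<noteq> SW (SE (c (Suc s)))"
  proof
    assume h: "w = SW (SE (c (Suc s)))"
    then have wc: "w = c s" using SW_SE dn_c by simp
    show False
    proof (cases "s = 0")
      case True
      then show False using lnk_D[OF tl w] wc c0 m0 by simp
    next
      case False
      then have "lnk Q (c s) (SE (c s))" using IH by simp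
      then have "SE (c (Suc s)) = SE (c s)" using lnk_fun[OF tl] w wc by metis
      then show False using c_inj by (simp add: c_def nds)
    qed
  qed
  then have "w = UL (SE (c (Suc s)))" using pred_cases[OF tl lc cv w] by blast
  then have L1: "lnk Q (c (Suc s)) (SE (c (Suc s)))" using w UL_SE by simp
  have "NE (SW (c (Suc s))) \<in> E" using e NE_SW by simp
  then obtain y where y: "lnk Q (SW (c (Suc s))) y" using has_succ[OF tl lc cv e(2)] by blast
  have "y \<noteq> SE (SW (c (Suc s)))"
  proof
    assume h: "y = SE (SW (c (Suc s)))"
    then have yc: "y = c s" using SE_SW dn_c by simp
    show False
    proof (cases "s = 0")
      case True
      then show False using lnk_D[OF tl y] yc c0 m0 by simp
    next
      case False
      then have "lnk Q (SW (c s)) (c s)" using IH by simp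
      then have "SW (c (Suc s)) = SW (c s)" using lnk_inj[OF tl] y yc by metis
      then show False using c_inj by (simp add: c_def nds)
    qed
  qed
  then have "y = NE (SW (c (Suc s)))" using lnk_D[OF tl y] by blast
  then have L2: "lnk Q (SW (c (Suc s))) (c (Suc s))" using y NE_SW by simp
  show ?case using L1 L2 by simp
qed

end



lemma img_insert_repl:
  assumes "v \<in> T" "\<And>x. x \<in> T \<Longrightarrow> x \<noteq> v \<Longrightarrow> g x = x"
  shows "g ` T = insert (g v) (T - {v})"
proof
  show "g ` T \<subseteq> insert (g v) (T - {v})"
  proof
    fix y assume "y \<in> g ` T"
    then obtain x where x: "x \<in> T" "y = g x" by blast
    show "y \<in> insert (g v) (T - {v})"
    proof (cases "x = v")
      case True then show ?thesis using x by simp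
    next
      case False then have "g x = x" by (rule assms(2)[OF x(1)])
      then show ?thesis using x False by simp
    qed
  qed
  show "insert (g v) (T - {v}) \<subseteq> g ` T"
  proof
    fix y assume "y \<in> insert (g v) (T - {v})"
    then consider "y = g v" | "y \<in> T" "y \<noteq> v" by blast
    then show "y \<in> g ` T"
    proof cases
      case 1 then show ?thesis using assms(1) by blast
    next
      case 2
      have gy: "g y = y" by (rule assms(2)[OF 2(1) 2(2)])
      show ?thesis by (rule image_eqI[of y g y]) (use gy 2 in simp_all)
    qed
  qed
qed

lemma dy_img1:
  assumes d: "dy T" and v: "v \<in> T" and g: "\<And>x. x \<in> T \<Longrightarrow> x \<noteq> v \<Longrightarrow> g x = x"
    and cv: "column (g v) = column v" and s: "v \<noteq> tile_start T" and e: "v \<noteq> tile_end T"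
    and vv: "valid_node (g v)" and h: "height (g v) \<le> Mx T"
    and L: "\<And>x. x \<in> T \<Longrightarrow> column x = column v - 1 \<Longrightarrow> g v = NE x \<or> g v = SE x"
    and R: "\<And>y. y \<in> T \<Longrightarrow> column y = column v + 1 \<Longrightarrow> y = NE (g v) \<or> y = SE (g v)"
  shows "dy (g ` T) \<and> Mx (g ` T) = Mx T"
proof -
  have eq: "g ` T = insert (g v) (T - {v})" by (rule img_insert_repl[OF v g])
  show ?thesis unfolding eq by (rule dy_replace[OF d v s e cv vv h L R])
qed

lemma tile_of_img:
  assumes tl: "tiling E P" and inj: "inj_on g E" and T: "T \<in> P" and x: "x \<in> T"
    and d: "\<And>T. T \<in> P \<Longrightarrow> dy (g ` T)"
  shows "tile_of ((`) g ` P) (g x) = g ` T"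
proof -
  have tl2: "tiling (g ` E) ((`) g ` P)" by (rule tiling_image[OF tl inj d])
  show ?thesis by (rule tile_of_eq[OF tl2]) (use T x in auto)
qed

lemma img_img:
  assumes "\<And>x. x \<in> \<Union>P \<Longrightarrow> g (f x) = x"
  shows "(`) g ` ((`) f ` P) = P"
proof -
  have "(`) g ` ((`) f ` P) = (\<lambda>T. g ` f ` T) ` P" by (simp add: image_comp)
  also have "\<dots> = (\<lambda>T. T) ` P"
  proof (rule image_cong[OF refl])
    fix T assume "T \<in> P"
    then have "\<And>x. x \<in> T \<Longrightarrow> g (f x) = x" using assms by blast
    then show "g ` f ` T = T" by (simp add: image_image)
  qed
  finally show ?thesis by simp
qed

context S
begin

definition upS :: "nat \<Rightarrow> node \<Rightarrow> node" where "upS k x = (if x \<in> c ` {..<k} then up x else x)"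
definition dnS :: "nat \<Rightarrow> node \<Rightarrow> node" where "dnS k x = (if x \<in> c ` {1..k} then dn x else x)"

definition A where "A = {P. tiling D P \<and> loc D P}"
definition A1 where "A1 = {P\<in>A. Mx (tile_of P (c n)) = height (c n) + 1}"
definition B where "B = {Q. tiling D1 Q \<and> loc D1 Q}"
definition C where "C = {Q. tiling D2 Q \<and> loc D2 Q}"

lemma col_upS[simp]: "column (upS k x) = column x" by (simp add: upS_def)
lemma col_dnS[simp]: "column (dnS k x) = column x" by (simp add: dnS_def)

lemma upS_c: "t < k \<Longrightarrow> upS k (c t) = c (Suc t)" by (auto simp: upS_def up_c)
lemma upS_id: assumes "\<And>t. t < k \<Longrightarrow> x \<noteq> c t" shows "upS k x = x"
proof -
  have "x \<notin> c ` {..<k}"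
  proof
    assume "x \<in> c ` {..<k}"
    then obtain t where "t \<in> {..<k}" "x = c t" by blast
    then show False using assms[of t] by simp
  qed
  then show ?thesis unfolding upS_def by simp
qed
lemma dnS_c: "t < k \<Longrightarrow> dnS k (c (Suc t)) = c t" by (auto simp: dnS_def dn_c)
lemma dnS_id: assumes "\<And>t. 1 \<le> t \<Longrightarrow> t \<le> k \<Longrightarrow> x \<noteq> c t" shows "dnS k x = x"
proof -
  have "x \<notin> c ` {1..k}"
  proof
    assume "x \<in> c ` {1..k}"
    then obtain t where "t \<in> {1..k}" "x = c t" by blast
    then show False using assms[of t] by simp
  qed
  then show ?thesis unfolding dnS_def by simp
qed

lemma col_ne: "column x \<noteq> column m \<Longrightarrow> x \<noteq> c t" by auto

lemma diag_c: "column x = column m \<Longrightarrow> fst m \<le> fst x \<Longrightarrow> \<exists>t. x = c (nat (fst x - fst m))"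
  by (cases x) (auto simp: c_def nds)

lemma dnS_upS: "x \<noteq> c k \<Longrightarrow> dnS k (upS k x) = x"
proof (cases "\<exists>t<k. x = c t")
  case True
  then obtain t where t: "t < k" "x = c t" by blast
  then show ?thesis using upS_c dnS_c by simp
next
  case False
  assume xk: "x \<noteq> c k"
  have "upS k x = x" using False by (auto intro: upS_id)
  moreover have "dnS k x = x"
  proof (rule dnS_id)
    fix t assume "1 \<le> t" "t \<le> k"
    show "x \<noteq> c t"
    proof (cases "t = k")
      case True then show ?thesis using xk by simp
    next
      case False2: False
      then have "t < k" using \<open>t \<le> k\<close> by simp
      then show ?thesis using False by blast
    qed
  qed
  ultimately show ?thesis by simp
qed

lemma upS_dnS: "x \<noteq> c 0 \<Longrightarrow> upS k (dnS k x) = x"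
proof (cases "\<exists>t<k. x = c (Suc t)")
  case True
  then obtain t where t: "t < k" "x = c (Suc t)" by blast
  then show ?thesis using upS_c dnS_c by simp
next
  case False
  assume x0: "x \<noteq> c 0"
  have d: "dnS k x = x"
  proof (rule dnS_id)
    fix t assume "1 \<le> t" "t \<le> k"
    then obtain s where s: "t = Suc s" "s < k" by (cases t) auto
    then show "x \<noteq> c t" using False by blast
  qed
  have "upS k x = x"
  proof (rule upS_id)
    fix t assume "t < k"
    show "x \<noteq> c t"
    proof (cases t)
      case 0 then show ?thesis using x0 by simp
    next
      case (Suc s) then show ?thesis using False \<open>t < k\<close> by auto
    qed
  qed
  then show ?thesis using d by simp
qed

lemma inj_upS: "inj_on (upS k) (E - {c k})"
proof (rule inj_on_inverseI)
  fix x assume "x \<in> E - {c k}" then show "dnS k (upS k x) = x" using dnS_upS by simp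
qed

lemma inj_dnS: "inj_on (dnS k) (E - {c 0})"
proof (rule inj_on_inverseI)
  fix x assume "x \<in> E - {c 0}" then show "upS k (dnS k x) = x" using upS_dnS by simp
qed

end



lemma NE_dn: "NE (dn x) = SE x" by (simp add: nds dn_def)
lemma SW_NE: "SW (NE x) = x" by (simp add: nds)

context S
begin

lemma upS_D2: "upS (Suc n) ` D = D2"
proof
  show "upS (Suc n) ` D \<subseteq> D2"
  proof
    fix y assume "y \<in> upS (Suc n) ` D"
    then obtain x where x: "x \<in> D" "y = upS (Suc n) x" by blast
    show "y \<in> D2"
    proof (cases "\<exists>t<Suc n. x = c t")
      case True
      then obtain t where t: "t < Suc n" "x = c t" by blast
      then have y: "y = c (Suc t)" using x upS_c by simp
      show ?thesis
      proof (cases "t = n")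
        case True then show ?thesis using y D2_eq by simp
      next
        case False
        then have "c (Suc t) \<in> D" using cD t by simp
        moreover have "c (Suc t) \<noteq> m" using c0 c_inj[of "Suc t" 0] by simp
        ultimately show ?thesis using y D2_eq by simp
      qed
    next
      case False
      have "upS (Suc n) x = x" by (rule upS_id) (use False in blast)
      then have "y = x" using x by simp
      moreover have "x \<noteq> m"
      proof
        assume "x = m" then have "x = c 0" using c0 by simp
        then show False using False by blast
      qed
      ultimately show ?thesis using x D2_eq by simp
    qed
  qed
  show "D2 \<subseteq> upS (Suc n) ` D"
  proof
    fix y assume y: "y \<in> D2"
    show "y \<in> upS (Suc n) ` D"
    proof (cases "y = c (Suc n)")
      case True
      then have "y = upS (Suc n) (c n)" using upS_c by simp
      then show ?thesis using cD[of n] by blast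
    next
      case False
      then have yD: "y \<in> D" "y \<noteq> m" using y D2_eq by auto
      show ?thesis
      proof (cases "\<exists>t<Suc n. y = c t")
        case True
        then obtain t where t: "t < Suc n" "y = c t" by blast
        then obtain s where s: "t = Suc s" using yD c0 by (cases t) auto
        then have "y = upS (Suc n) (c s)" using t upS_c by simp
        moreover have "c s \<in> D" using cD s t by simp
        ultimately show ?thesis by blast
      next
        case False
        have "upS (Suc n) y = y" by (rule upS_id) (use False in blast)
        then have "y = upS (Suc n) y" by simp
        then show ?thesis using yD by blast
      qed
    qed
  qed
qed

lemma dnS_D: "dnS (Suc n) ` D2 = D"
proof -
  have "dnS (Suc n) ` D2 = dnS (Suc n) ` upS (Suc n) ` D" using upS_D2 by simp
  also have "\<dots> = (\<lambda>x. dnS (Suc n) (upS (Suc n) x)) ` D" by (simp add: image_comp)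
  also have "\<dots> = (\<lambda>x. x) ` D"
    by (rule image_cong[OF refl]) (use dnS_upS l_notD in metis)
  finally show ?thesis by simp
qed

lemma l_D2: "c (Suc n) \<in> D2" using D2_eq by simp
lemma m_notD2: "m \<notin> D2" using D2_eq c0 c_inj[of "Suc n" 0] by auto

lemma tau_tile:
  assumes P: "P \<in> A" "P \<notin> A1" and T: "T \<in> P"
  shows "dy (upS (Suc n) ` T)"
proof -
  have tl: "tiling D P" and lc: "loc D P" using P unfolding A_def by auto
  have pT: "pth T" using t_pth[OF tl T] .
  have dT: "dy T" using t_dy[OF tl T] .
  let ?g = "upS (Suc n)"
  show ?thesis
  proof (cases "\<exists>t\<le>n. c t \<in> T")
    case False
    have "\<forall>x\<in>T. ?g x = x"
    proof
      fix x assume "x \<in> T"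
      then show "?g x = x" using False by (intro upS_id) auto
    qed
    then have "?g ` T = T" by simp
    then show ?thesis using dT by simp
  next
    case True
    then obtain t where t: "t \<le> n" "c t \<in> T" by blast
    let ?v = "c t"
    have V: "lnk P (UL ?v) ?v" "lnk P ?v (NE ?v)" using valleys[OF tl lc t(1)] by auto
    have UT: "UL ?v \<in> T" using lnk_same[OF tl V(1) T t(2)] .
    have NT: "NE ?v \<in> T" using lnk_same2[OF tl V(2) T t(2)] .
    have gv: "?g ?v = up ?v" using upS_c[of t "Suc n"] t up_c by simp
    have oth: "?g x = x" if "x \<in> T" "x \<noteq> ?v" for x
    proof (rule upS_id)
      fix s assume "s < Suc n"
      show "x \<noteq> c s"
      proof
        assume "x = c s"
        then have "column x = column ?v" by simp
        then show False using pth_colinj[OF pT that(1) t(2)] that(2) by simp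
      qed
    qed
    have s: "?v \<noteq> tile_start T"
    proof
      assume "?v = tile_start T"
      then show False using start_nopred[OF tl T] V(1) by metis
    qed
    have e: "?v \<noteq> tile_end T"
    proof
      assume "?v = tile_end T"
      then show False using end_nosucc[OF tl T] V(2) by metis
    qed
    have vv: "valid_node (?g ?v)"
    proof -
      have "valid_node ?v" using cD[OF t(1)] lam_valid unfolding D_def by blast
      then show ?thesis using gv by (simp add: valid_iff up_def)
    qed
    have MUL: "height (UL ?v) \<le> Mx T" using Mx_ge[OF pT UT] .
    have h: "height ?v + 2 \<le> Mx T"
    proof (cases "t = n")
      case True
      then have "tile_of P (c n) = T" using tile_of_eq[OF tl T t(2)] by simp
      then have "Mx T \<noteq> height ?v + 1" using P True unfolding A1_def by auto
      then show ?thesis using MUL by simp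
    next
      case False
      then have tn: "Suc t \<le> n" using t by simp
      let ?T' = "tile_of P (c (Suc t))"
      have T': "?T' \<in> P" "c (Suc t) \<in> ?T'" using tile_of_in[OF tl cD[OF tn]] by auto
      have V': "lnk P (UL (c (Suc t))) (c (Suc t))" using valleys[OF tl lc tn] by auto
      have UT': "UL (c (Suc t)) \<in> ?T'" using lnk_same[OF tl V' T'(1) T'(2)] .
      have ne: "T \<noteq> ?T'"
      proof
        assume "T = ?T'"
        then have "c (Suc t) = ?v" using pth_colinj[OF pT] T'(2) t(2) by simp
        then show False using c_inj by simp
      qed
      have M': "height ?v + 3 \<le> Mx ?T'"
        using Mx_ge[OF t_pth[OF tl T'(1)] UT'] ht_c[of t] ht_c[of "Suc t"] by simp
      show ?thesis
      proof (rule ccontr)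
        assume "\<not> height ?v + 2 \<le> Mx T"
        then have H1: "Mx T \<le> height ?v + 1" by simp
        have H2: "height ?v + 1 + 2 \<le> Mx ?T'" using M' by simp
        have "up (UL ?v) \<in> ?T'" using UT' UL_up up_c by metis
        then show False using lemV[OF tl lc cvxD T T'(1) ne H1 H2 refl UT] by blast
      qed
    qed
    have hg: "height (?g ?v) \<le> Mx T" using h gv by simp
    have L: "?g ?v = NE x \<or> ?g ?v = SE x" if "x \<in> T" "column x = column ?v - 1" for x
    proof -
      have "x = UL ?v" using pth_colinj[OF pT that(1) UT] that(2) by simp
      then show ?thesis using gv NE_UL by simp
    qed
    have R: "y = NE (?g ?v) \<or> y = SE (?g ?v)" if "y \<in> T" "column y = column ?v + 1" for y
    proof -
      have "y = NE ?v" using pth_colinj[OF pT that(1) NT] that(2) by simp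
      then show ?thesis using gv SE_up by simp
    qed
    have cg: "column (?g ?v) = column ?v" by simp
    show ?thesis using dy_img1[OF dT t(2) oth cg s e vv hg L R] by blast
  qed
qed

lemma lnk_tau:
  "lnk ((`) (upS k) ` P) u v \<longleftrightarrow> (\<exists>x y. lnk P x y \<and> u = upS k x \<and> v = upS k y)"
  by (rule lnk_image) simp

lemma lnk_phi:
  "lnk ((`) (dnS k) ` P) u v \<longleftrightarrow> (\<exists>x y. lnk P x y \<and> u = dnS k x \<and> v = dnS k y)"
  by (rule lnk_image) simp

lemma tau_in:
  assumes P: "P \<in> A" "P \<notin> A1"
  shows "(`) (upS (Suc n)) ` P \<in> C"
proof -
  have tl: "tiling D P" and lc: "loc D P" using P unfolding A_def by auto
  let ?g = "upS (Suc n)"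
  let ?Q = "(`) ?g ` P"
  have inj: "inj_on ?g D"
  proof -
    have "D = D - {c (Suc n)}" using l_notD by blast
    then show ?thesis using inj_upS[of "Suc n" D] by simp
  qed
  have tl2: "tiling D2 ?Q" using tiling_image[OF tl inj tau_tile[OF P]] upS_D2 by simp
  have gid: "?g x = x" if "column x \<noteq> column m" for x using that by (intro upS_id) auto
  have gid2: "?g u = u" if "u \<in> D" "u \<noteq> m" "\<not> (\<exists>t\<le>n. u = c (Suc t))" for u
  proof (rule upS_id)
    fix s assume "s < Suc n"
    show "u \<noteq> c s"
    proof (cases s)
      case 0 then show ?thesis using that c0 by simp
    next
      case (Suc s') then show ?thesis using that \<open>s < Suc n\<close> by auto
    qed
  qed
  have loc2: "loc D2 ?Q" unfolding loc_def
  proof (intro conjI ballI impI)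
    fix u assume u: "u \<in> D2" "UL u \<in> D2"
    have "\<exists>x y. lnk P x y \<and> u = ?g y"
    proof (cases "\<exists>t\<le>n. u = c (Suc t)")
      case True
      then obtain t where t: "t \<le> n" "u = c (Suc t)" by blast
      have "lnk P (UL (c t)) (c t)" using valleys[OF tl lc t(1)] by blast
      moreover have "?g (c t) = u" using upS_c t by simp
      ultimately show ?thesis by metis
    next
      case False
      then have uD: "u \<in> D" "u \<noteq> m" using u D2_eq by auto
      have gu: "?g u = u" using gid2[OF uD False] .
      show ?thesis
      proof (cases "UL u \<in> D")
        case True
        then obtain w where "lnk P w u" using has_pred[OF tl lc cvxD uD(1)] by blast
        then show ?thesis using gu by metis
      next
        case False
        then have "UL u = c (Suc n)" using u D2_eq by auto
        then have "u = NE (c n)" using SE_c[of n] SE_UL[of u] by simp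
        moreover have "lnk P (c n) (NE (c n))" using valleys[OF tl lc, of n] by simp
        moreover have "?g (NE (c n)) = NE (c n)" by (rule gid) simp
        ultimately show ?thesis by metis
      qed
    qed
    then show "\<exists>w. lnk ?Q w u" using lnk_tau by metis
  next
    fix u assume u: "u \<in> D2" "NE u \<in> D2"
    have "\<exists>x y. lnk P x y \<and> u = ?g x"
    proof (cases "\<exists>t\<le>n. u = c (Suc t)")
      case True
      then obtain t where t: "t \<le> n" "u = c (Suc t)" by blast
      have "lnk P (c t) (NE (c t))" using valleys[OF tl lc t(1)] by blast
      moreover have "?g (c t) = u" using upS_c t by simp
      ultimately show ?thesis by metis
    next
      case False
      then have uD: "u \<in> D" "u \<noteq> m" using u D2_eq by auto
      have gu: "?g u = u" using gid2[OF uD False] .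
      show ?thesis
      proof (cases "NE u \<in> D")
        case True
        then obtain y where "lnk P u y" using has_succ[OF tl lc cvxD uD(1)] by blast
        then show ?thesis using gu by metis
      next
        case False
        then have "NE u = c (Suc n)" using u D2_eq by auto
        then have "u = UL (c n)" using SW_c[of n] SW_NE[of u] by simp
        moreover have "lnk P (UL (c n)) (c n)" using valleys[OF tl lc, of n] by simp
        moreover have "?g (UL (c n)) = UL (c n)" by (rule gid) simp
        ultimately show ?thesis by metis
      qed
    qed
    then show "\<exists>v. lnk ?Q u v" using lnk_tau by metis
  qed
  show ?thesis unfolding C_def using tl2 loc2 by simp
qed

end



context S
begin

lemma peaks2:
  assumes tl: "tiling D2 Q" and lc: "loc D2 Q"
  shows "1 \<le> t \<Longrightarrow> t \<le> Suc n \<Longrightarrow> lnk Q (SW (c t)) (c t) \<and> lnk Q (c t) (SE (c t))"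
proof (rule peaks[OF tl lc cvxD2 m_notD2])
  fix t assume t: "1 \<le> t" "t \<le> Suc n"
  then obtain s where s: "t = Suc s" "s \<le> n" by (cases t) auto
  have ct: "c t \<in> D2"
  proof (cases "s = n")
    case True then show ?thesis using s l_D2 by simp
  next
    case False
    then have "c t \<in> D" using cD s by simp
    moreover have "c t \<noteq> m" using c0 c_inj[of t 0] s by simp
    ultimately show ?thesis using D2_eq by simp
  qed
  have "SW (c t) = UL (c s)" using SW_c s by simp
  moreover have "UL (c s) \<in> D" "UL (c s) \<noteq> m" using ULD[OF s(2)] UL_ne_m[OF cD[OF s(2)]] by auto
  ultimately have sw: "SW (c t) \<in> D2" using D2_eq by simp
  have "SE (c t) = NE (c s)" using SE_c s by simp
  moreover have "NE (c s) \<in> D" "NE (c s) \<noteq> m" using NED[OF s(2)] NE_ne_m[OF cD[OF s(2)]] by auto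
  ultimately have se: "SE (c t) \<in> D2" using D2_eq by simp
  show "c t \<in> D2 \<and> SW (c t) \<in> D2 \<and> SE (c t) \<in> D2" using ct sw se by simp
qed

lemma phi_tile:
  assumes Q: "Q \<in> C" and T: "T \<in> Q"
  shows "dy (dnS (Suc n) ` T) \<and> Mx (dnS (Suc n) ` T) = Mx T"
proof -
  have tl: "tiling D2 Q" and lc: "loc D2 Q" using Q unfolding C_def by auto
  have pT: "pth T" using t_pth[OF tl T] .
  have dT: "dy T" using t_dy[OF tl T] .
  let ?g = "dnS (Suc n)"
  show ?thesis
  proof (cases "\<exists>t. 1 \<le> t \<and> t \<le> Suc n \<and> c t \<in> T")
    case False
    have "\<forall>x\<in>T. ?g x = x"
    proof
      fix x assume "x \<in> T"
      then show "?g x = x" using False by (intro dnS_id) auto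
    qed
    then have "?g ` T = T" by simp
    then show ?thesis using dT by simp
  next
    case True
    then obtain t where t: "1 \<le> t" "t \<le> Suc n" "c t \<in> T" by blast
    then obtain s where s: "t = Suc s" "s \<le> n" by (cases t) auto
    let ?v = "c t"
    have V: "lnk Q (SW ?v) ?v" "lnk Q ?v (SE ?v)" using peaks2[OF tl lc t(1,2)] by auto
    have ST: "SW ?v \<in> T" using lnk_same[OF tl V(1) T t(3)] .
    have ET: "SE ?v \<in> T" using lnk_same2[OF tl V(2) T t(3)] .
    have gv: "?g ?v = dn ?v" using dnS_c[of s "Suc n"] s dn_c by simp
    have oth: "?g x = x" if "x \<in> T" "x \<noteq> ?v" for x
    proof (rule dnS_id)
      fix r assume "1 \<le> r" "r \<le> Suc n"
      show "x \<noteq> c r"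
      proof
        assume "x = c r"
        then have "column x = column ?v" by simp
        then show False using pth_colinj[OF pT that(1) t(3)] that(2) by simp
      qed
    qed
    have st: "?v \<noteq> tile_start T"
    proof
      assume "?v = tile_start T"
      then show False using start_nopred[OF tl T] V(1) by metis
    qed
    have e: "?v \<noteq> tile_end T"
    proof
      assume "?v = tile_end T"
      then show False using end_nosucc[OF tl T] V(2) by metis
    qed
    have vv: "valid_node (?g ?v)"
    proof -
      have "?g ?v = c s" using gv s dn_c by simp
      then show ?thesis using cD[OF s(2)] lam_valid unfolding D_def by auto
    qed
    have hg: "height (?g ?v) \<le> Mx T" using Mx_ge[OF pT t(3)] gv by simp
    have L: "?g ?v = NE x \<or> ?g ?v = SE x" if "x \<in> T" "column x = column ?v - 1" for x
    proof -
      have "x = SW ?v" using pth_colinj[OF pT that(1) ST] that(2) by simp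
      then show ?thesis using gv SE_SW by simp
    qed
    have R: "y = NE (?g ?v) \<or> y = SE (?g ?v)" if "y \<in> T" "column y = column ?v + 1" for y
    proof -
      have "y = SE ?v" using pth_colinj[OF pT that(1) ET] that(2) by simp
      then show ?thesis using gv NE_dn by simp
    qed
    have cg: "column (?g ?v) = column ?v" by simp
    show ?thesis using dy_img1[OF dT t(3) oth cg st e vv hg L R] by blast
  qed
qed

lemma inj_dn2: "inj_on (dnS (Suc n)) D2"
proof -
  have "c 0 \<notin> D2" using m_notD2 c0 by simp
  then have "D2 = D2 - {c 0}" by simp
  then show ?thesis using inj_dnS[of "Suc n" D2] by simp
qed

lemma phi_in:
  assumes Q: "Q \<in> C"
  shows "(`) (dnS (Suc n)) ` Q \<in> A \<and> (`) (dnS (Suc n)) ` Q \<notin> A1"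
proof -
  have tl: "tiling D2 Q" and lc: "loc D2 Q" using Q unfolding C_def by auto
  let ?g = "dnS (Suc n)"
  let ?P = "(`) ?g ` Q"
  have dd: "\<And>T. T \<in> Q \<Longrightarrow> dy (?g ` T)" using phi_tile[OF Q] by blast
  have tl2: "tiling D ?P" using tiling_image[OF tl inj_dn2 dd] dnS_D by simp
  have gid: "?g x = x" if "column x \<noteq> column m" for x using that by (intro dnS_id) auto
  have gid2: "?g u = u" if "u \<in> D" "\<not> (\<exists>t\<le>n. u = c t)" for u
  proof (rule dnS_id)
    fix r assume r: "1 \<le> r" "r \<le> Suc n"
    show "u \<noteq> c r"
    proof (cases "r = Suc n")
      case True then show ?thesis using that l_notD by auto
    next
      case False then show ?thesis using that r by auto
    qed
  qed
  have inD2: "u \<in> D2" if "u \<in> D" "u \<noteq> m" for u using that D2_eq by simp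
  have loc2: "loc D ?P" unfolding loc_def
  proof (intro conjI ballI impI)
    fix u assume u: "u \<in> D" "UL u \<in> D"
    have "\<exists>x y. lnk Q x y \<and> u = ?g y"
    proof (cases "\<exists>t\<le>n. u = c t")
      case True
      then obtain t where t: "t \<le> n" "u = c t" by blast
      have "lnk Q (SW (c (Suc t))) (c (Suc t))" using peaks2[OF tl lc, of "Suc t"] t by simp
      moreover have "?g (c (Suc t)) = u" using dnS_c t by simp
      ultimately show ?thesis by metis
    next
      case False
      have gu: "?g u = u" using gid2[OF u(1) False] .
      have um: "u \<noteq> m" using False c0 by auto
      have "UL u \<in> D2" using inD2[OF u(2) UL_ne_m[OF u(1)]] .
      then obtain w where "lnk Q w u" using has_pred[OF tl lc cvxD2 inD2[OF u(1) um]] by blast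
      then show ?thesis using gu by metis
    qed
    then show "\<exists>w. lnk ?P w u" using lnk_phi by metis
  next
    fix u assume u: "u \<in> D" "NE u \<in> D"
    have "\<exists>x y. lnk Q x y \<and> u = ?g x"
    proof (cases "\<exists>t\<le>n. u = c t")
      case True
      then obtain t where t: "t \<le> n" "u = c t" by blast
      have "lnk Q (c (Suc t)) (SE (c (Suc t)))" using peaks2[OF tl lc, of "Suc t"] t by simp
      moreover have "?g (c (Suc t)) = u" using dnS_c t by simp
      ultimately show ?thesis by metis
    next
      case False
      have gu: "?g u = u" using gid2[OF u(1) False] .
      have um: "u \<noteq> m" using False c0 by auto
      have "NE u \<in> D2" using inD2[OF u(2) NE_ne_m[OF u(1)]] .
      then obtain y where "lnk Q u y" using has_succ[OF tl lc cvxD2 inD2[OF u(1) um]] by blast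
      then show ?thesis using gu by metis
    qed
    then show "\<exists>v. lnk ?P u v" using lnk_phi by metis
  qed
  have inA: "?P \<in> A" unfolding A_def using tl2 loc2 by simp
  let ?T = "tile_of Q (c (Suc n))"
  have T: "?T \<in> Q" "c (Suc n) \<in> ?T" using tile_of_in[OF tl l_D2] by auto
  have "tile_of ?P (?g (c (Suc n))) = ?g ` ?T" by (rule tile_of_img[OF tl inj_dn2 T dd])
  moreover have "?g (c (Suc n)) = c n" using dnS_c by simp
  ultimately have tt: "tile_of ?P (c n) = ?g ` ?T" by simp
  have "Mx (?g ` ?T) = Mx ?T" using phi_tile[OF Q T(1)] by blast
  moreover have "height (c (Suc n)) \<le> Mx ?T" using Mx_ge[OF t_pth[OF tl T(1)] T(2)] .
  ultimately have "Mx (tile_of ?P (c n)) \<noteq> height (c n) + 1" using tt ht_c[of n] ht_c[of "Suc n"] by simp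
  then show ?thesis using inA unfolding A1_def by simp
qed

lemma bij_tau: "bij_betw (\<lambda>P. (`) (upS (Suc n)) ` P) (A - A1) C"
proof (rule bij_betw_byWitness[where f' = "\<lambda>Q. (`) (dnS (Suc n)) ` Q"])
  show "\<forall>P\<in>A - A1. (`) (dnS (Suc n)) ` ((`) (upS (Suc n)) ` P) = P"
  proof
    fix P assume P: "P \<in> A - A1"
    then have tl: "tiling D P" unfolding A_def by simp
    show "(`) (dnS (Suc n)) ` ((`) (upS (Suc n)) ` P) = P"
    proof (rule img_img)
      fix x assume "x \<in> \<Union>P"
      then have "x \<noteq> c (Suc n)" using t_union[OF tl] l_notD by auto
      then show "dnS (Suc n) (upS (Suc n) x) = x" by (rule dnS_upS)
    qed
  qed
  show "\<forall>Q\<in>C. (`) (upS (Suc n)) ` ((`) (dnS (Suc n)) ` Q) = Q"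
  proof
    fix Q assume Q: "Q \<in> C"
    then have tl: "tiling D2 Q" unfolding C_def by simp
    show "(`) (upS (Suc n)) ` ((`) (dnS (Suc n)) ` Q) = Q"
    proof (rule img_img)
      fix x assume "x \<in> \<Union>Q"
      then have "x \<noteq> c 0" using t_union[OF tl] m_notD2 c0 by auto
      then show "upS (Suc n) (dnS (Suc n) x) = x" by (rule upS_dnS)
    qed
  qed
  show "(\<lambda>P. (`) (upS (Suc n)) ` P) ` (A - A1) \<subseteq> C" using tau_in by blast
  show "(\<lambda>Q. (`) (dnS (Suc n)) ` Q) ` C \<subseteq> A - A1" using phi_in by blast
qed

end



context S
begin

lemma mx_lemV:
  assumes P: "P \<in> A" and t: "t < n"
  shows "height (c t) + 2 \<le> Mx (tile_of P (c t))"
proof -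
  have tl: "tiling D P" and lc: "loc D P" using P unfolding A_def by auto
  let ?T = "tile_of P (c t)"
  have T: "?T \<in> P" "c t \<in> ?T" using tile_of_in[OF tl cD] t by auto
  have pT: "pth ?T" using t_pth[OF tl T(1)] .
  have V: "lnk P (UL (c t)) (c t)" using valleys[OF tl lc] t by simp
  have UT: "UL (c t) \<in> ?T" using lnk_same[OF tl V T] .
  have tn: "Suc t \<le> n" using t by simp
  let ?T' = "tile_of P (c (Suc t))"
  have T': "?T' \<in> P" "c (Suc t) \<in> ?T'" using tile_of_in[OF tl cD[OF tn]] by auto
  have V': "lnk P (UL (c (Suc t))) (c (Suc t))" using valleys[OF tl lc tn] by auto
  have UT': "UL (c (Suc t)) \<in> ?T'" using lnk_same[OF tl V' T'(1) T'(2)] .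
  have ne: "?T \<noteq> ?T'"
  proof
    assume "?T = ?T'"
    then have "c (Suc t) = c t" using pth_colinj[OF pT] T'(2) T(2) by simp
    then show False using c_inj by simp
  qed
  have M': "height (c t) + 3 \<le> Mx ?T'"
    using Mx_ge[OF t_pth[OF tl T'(1)] UT'] ht_c[of t] ht_c[of "Suc t"] by simp
  show ?thesis
  proof (rule ccontr)
    assume "\<not> height (c t) + 2 \<le> Mx ?T"
    then have H1: "Mx ?T \<le> height (c t) + 1" by simp
    have H2: "height (c t) + 1 + 2 \<le> Mx ?T'" using M' by simp
    have "up (UL (c t)) \<in> ?T'" using UT' UL_up up_c by metis
    then show False using lemV[OF tl lc cvxD T(1) T'(1) ne H1 H2 refl UT] by blast
  qed
qed

lemma shift_tile:
  assumes P: "P \<in> A" and T: "T \<in> P" and t: "t \<le> n" "c t \<in> T" and k: "t < k"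
    and h: "height (c t) + 2 \<le> Mx T"
  shows "dy (upS k ` T)"
proof -
  have tl: "tiling D P" and lc: "loc D P" using P unfolding A_def by auto
  have pT: "pth T" using t_pth[OF tl T] .
  have dT: "dy T" using t_dy[OF tl T] .
  let ?g = "upS k"
  let ?v = "c t"
  have V: "lnk P (UL ?v) ?v" "lnk P ?v (NE ?v)" using valleys[OF tl lc t(1)] by auto
  have UT: "UL ?v \<in> T" using lnk_same[OF tl V(1) T t(2)] .
  have NT: "NE ?v \<in> T" using lnk_same2[OF tl V(2) T t(2)] .
  have gv: "?g ?v = up ?v" using upS_c[OF k] up_c by simp
  have oth: "?g x = x" if "x \<in> T" "x \<noteq> ?v" for x
  proof (rule upS_id)
    fix s assume "s < k"
    show "x \<noteq> c s"
    proof
      assume "x = c s"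
      then have "column x = column ?v" by simp
      then show False using pth_colinj[OF pT that(1) t(2)] that(2) by simp
    qed
  qed
  have s: "?v \<noteq> tile_start T"
  proof
    assume "?v = tile_start T"
    then show False using start_nopred[OF tl T] V(1) by metis
  qed
  have e: "?v \<noteq> tile_end T"
  proof
    assume "?v = tile_end T"
    then show False using end_nosucc[OF tl T] V(2) by metis
  qed
  have vv: "valid_node (?g ?v)"
  proof -
    have "valid_node ?v" using cD[OF t(1)] lam_valid unfolding D_def by blast
    then show ?thesis using gv by (simp add: valid_iff up_def)
  qed
  have hg: "height (?g ?v) \<le> Mx T" using h gv by simp
  have L: "?g ?v = NE x \<or> ?g ?v = SE x" if "x \<in> T" "column x = column ?v - 1" for x
  proof -
    have "x = UL ?v" using pth_colinj[OF pT that(1) UT] that(2) by simp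
    then show ?thesis using gv NE_UL by simp
  qed
  have R: "y = NE (?g ?v) \<or> y = SE (?g ?v)" if "y \<in> T" "column y = column ?v + 1" for y
  proof -
    have "y = NE ?v" using pth_colinj[OF pT that(1) NT] that(2) by simp
    then show ?thesis using gv SE_up by simp
  qed
  have cg: "column (?g ?v) = column ?v" by simp
  show ?thesis using dy_img1[OF dT t(2) oth cg s e vv hg L R] by blast
qed

lemma upS_nocol: "(\<And>x. x \<in> T \<Longrightarrow> column x \<noteq> column m) \<Longrightarrow> upS k ` T = T"
proof -
  assume a: "\<And>x. x \<in> T \<Longrightarrow> column x \<noteq> column m"
  have "upS k x = x" if "x \<in> T" for x
  proof -
    have "column x \<noteq> column m" using a that by blast
    then show ?thesis by (intro upS_id col_ne)
  qed
  then show ?thesis by simp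
qed

lemma dnS_nocol: "(\<And>x. x \<in> T \<Longrightarrow> column x \<noteq> column m) \<Longrightarrow> dnS k ` T = T"
proof -
  assume a: "\<And>x. x \<in> T \<Longrightarrow> column x \<noteq> column m"
  have "dnS k x = x" if "x \<in> T" for x
  proof -
    have "column x \<noteq> column m" using a that by blast
    then show ?thesis by (intro dnS_id col_ne)
  qed
  then show ?thesis by simp
qed

lemma phi_tile_gen:
  assumes tl: "tiling E Q" and T: "T \<in> Q" and k: "k \<le> Suc n"
    and pk: "\<And>t. 1 \<le> t \<Longrightarrow> t \<le> k \<Longrightarrow> lnk Q (SW (c t)) (c t) \<and> lnk Q (c t) (SE (c t))"
  shows "dy (dnS k ` T) \<and> Mx (dnS k ` T) = Mx T"
proof -
  have pT: "pth T" using t_pth[OF tl T] .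
  have dT: "dy T" using t_dy[OF tl T] .
  let ?g = "dnS k"
  show ?thesis
  proof (cases "\<exists>t. 1 \<le> t \<and> t \<le> k \<and> c t \<in> T")
    case False
    have "\<forall>x\<in>T. ?g x = x"
    proof
      fix x assume "x \<in> T"
      then show "?g x = x" using False by (intro dnS_id) auto
    qed
    then have "?g ` T = T" by simp
    then show ?thesis using dT by simp
  next
    case True
    then obtain t where t: "1 \<le> t" "t \<le> k" "c t \<in> T" by blast
    then obtain s where s: "t = Suc s" "s < k" by (cases t) auto
    have sn: "s \<le> n" using s k by simp
    let ?v = "c t"
    have V: "lnk Q (SW ?v) ?v" "lnk Q ?v (SE ?v)" using pk[OF t(1,2)] by auto
    have ST: "SW ?v \<in> T" using lnk_same[OF tl V(1) T t(3)] .
    have ET: "SE ?v \<in> T" using lnk_same2[OF tl V(2) T t(3)] .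
    have gv: "?g ?v = dn ?v" using dnS_c[of s k] s dn_c by simp
    have oth: "?g x = x" if "x \<in> T" "x \<noteq> ?v" for x
    proof (rule dnS_id)
      fix r assume "1 \<le> r" "r \<le> k"
      show "x \<noteq> c r"
      proof
        assume "x = c r"
        then have "column x = column ?v" by simp
        then show False using pth_colinj[OF pT that(1) t(3)] that(2) by simp
      qed
    qed
    have st: "?v \<noteq> tile_start T"
    proof
      assume "?v = tile_start T"
      then show False using start_nopred[OF tl T] V(1) by metis
    qed
    have e: "?v \<noteq> tile_end T"
    proof
      assume "?v = tile_end T"
      then show False using end_nosucc[OF tl T] V(2) by metis
    qed
    have vv: "valid_node (?g ?v)"
    proof -
      have "?g ?v = c s" using gv s dn_c by simp
      then show ?thesis using cD[OF sn] lam_valid unfolding D_def by auto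
    qed
    have hg: "height (?g ?v) \<le> Mx T" using Mx_ge[OF pT t(3)] gv by simp
    have L: "?g ?v = NE x \<or> ?g ?v = SE x" if "x \<in> T" "column x = column ?v - 1" for x
    proof -
      have "x = SW ?v" using pth_colinj[OF pT that(1) ST] that(2) by simp
      then show ?thesis using gv SE_SW by simp
    qed
    have R: "y = NE (?g ?v) \<or> y = SE (?g ?v)" if "y \<in> T" "column y = column ?v + 1" for y
    proof -
      have "y = SE ?v" using pth_colinj[OF pT that(1) ET] that(2) by simp
      then show ?thesis using gv NE_dn by simp
    qed
    have cg: "column (?g ?v) = column ?v" by simp
    show ?thesis using dy_img1[OF dT t(3) oth cg st e vv hg L R] by blast
  qed
qed

lemma m_notD1: "m \<notin> D1" using D1_eq by simp

lemma inD1: "u \<in> D \<Longrightarrow> u \<noteq> m \<Longrightarrow> u \<in> D1" using D1_eq by simp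

lemma peaks1:
  assumes tl: "tiling D1 Q" and lc: "loc D1 Q"
  shows "1 \<le> t \<Longrightarrow> t \<le> n \<Longrightarrow> lnk Q (SW (c t)) (c t) \<and> lnk Q (c t) (SE (c t))"
proof (rule peaks[OF tl lc cvxD1 m_notD1])
  fix t assume t: "1 \<le> t" "t \<le> n"
  then obtain s where s: "t = Suc s" "s < n" by (cases t) auto
  have "c t \<in> D" using cD t by simp
  moreover have "c t \<noteq> m" using c0 c_inj[of t 0] s by simp
  ultimately have ct: "c t \<in> D1" using inD1 by simp
  have sn: "s \<le> n" using s by simp
  have "SW (c t) = UL (c s)" using SW_c s by simp
  then have sw: "SW (c t) \<in> D1" using inD1[OF ULD[OF sn] UL_ne_m[OF cD[OF sn]]] by simp
  have "SE (c t) = NE (c s)" using SE_c s by simp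
  then have se: "SE (c t) \<in> D1" using inD1[OF NED[OF sn] NE_ne_m[OF cD[OF sn]]] by simp
  show "c t \<in> D1 \<and> SW (c t) \<in> D1 \<and> SE (c t) \<in> D1" using ct sw se by simp
qed

lemma upS_D1: "upS n ` (D - {c n}) = D1"
proof
  show "upS n ` (D - {c n}) \<subseteq> D1"
  proof
    fix y assume "y \<in> upS n ` (D - {c n})"
    then obtain x where x: "x \<in> D" "x \<noteq> c n" "y = upS n x" by blast
    show "y \<in> D1"
    proof (cases "\<exists>t<n. x = c t")
      case True
      then obtain t where t: "t < n" "x = c t" by blast
      then have y: "y = c (Suc t)" using x upS_c by simp
      have "c (Suc t) \<in> D" using cD t by simp
      moreover have "c (Suc t) \<noteq> m" using c0 c_inj[of "Suc t" 0] by simp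
      ultimately show ?thesis using y inD1 by simp
    next
      case False
      have "upS n x = x" by (rule upS_id) (use False in blast)
      then have "y = x" using x by simp
      moreover have "x \<noteq> m"
      proof
        assume "x = m" then have "x = c 0" using c0 by simp
        then show False using False x(2) by (cases n) auto
      qed
      ultimately show ?thesis using x inD1 by simp
    qed
  qed
  show "D1 \<subseteq> upS n ` (D - {c n})"
  proof
    fix y assume y: "y \<in> D1"
    then have yD: "y \<in> D" "y \<noteq> m" using D1_eq by auto
    show "y \<in> upS n ` (D - {c n})"
    proof (cases "\<exists>t<n. y = c (Suc t)")
      case True
      then obtain t where t: "t < n" "y = c (Suc t)" by blast
      then have "y = upS n (c t)" using upS_c by simp
      moreover have "c t \<in> D - {c n}" using cD t c_inj[of t n] by simp
      ultimately show ?thesis by blast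
    next
      case False
      have "upS n y = y"
      proof (rule upS_id)
        fix s assume "s < n"
        show "y \<noteq> c s"
        proof (cases s)
          case 0 then show ?thesis using yD c0 by simp
        next
          case (Suc s') then show ?thesis using False \<open>s < n\<close> by auto
        qed
      qed
      moreover have "y \<noteq> c n"
      proof (cases n)
        case 0 then show ?thesis using yD c0 by simp
      next
        case (Suc n') then show ?thesis using False by auto
      qed
      ultimately show ?thesis using yD by (metis DiffI imageI singletonD)
    qed
  qed
qed

lemma dnS_D1: "dnS n ` D1 = D - {c n}"
proof -
  have "dnS n ` D1 = dnS n ` upS n ` (D - {c n})" using upS_D1 by simp
  also have "\<dots> = (\<lambda>x. dnS n (upS n x)) ` (D - {c n})" by (simp add: image_comp)
  also have "\<dots> = (\<lambda>x. x) ` (D - {c n})"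
    by (rule image_cong[OF refl]) (use dnS_upS in blast)
  finally show ?thesis by simp
qed

end



context S
begin

definition sig :: "node set set \<Rightarrow> node set set" where
  "sig P = (`) (upS n) ` (spl P (c n))"
definition phB :: "node set set \<Rightarrow> node set set" where
  "phB Q = mrg ((`) (dnS n) ` Q) (c n) (UL (c n)) (NE (c n))"

lemma LR_dy:
  assumes P: "P \<in> A1"
  shows "dy {x\<in>tile_of P (c n). column x < column (c n)} \<and> dy {x\<in>tile_of P (c n). column (c n) < column x}
    \<and> UL (c n) \<in> {x\<in>tile_of P (c n). column x < column (c n)} \<and> NE (c n) \<in> {x\<in>tile_of P (c n). column (c n) < column x}"
proof -
  have tl: "tiling D P" and lc: "loc D P" and MxT: "Mx (tile_of P (c n)) = height (c n) + 1"
    using P unfolding A1_def A_def by auto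
  let ?T = "tile_of P (c n)"
  let ?L = "{x\<in>?T. column x < column (c n)}" and ?R = "{x\<in>?T. column (c n) < column x}"
  have T: "?T \<in> P" "c n \<in> ?T" using tile_of_in[OF tl cD] by auto
  have pT: "pth ?T" using t_pth[OF tl T(1)] .
  have dT: "dy ?T" using t_dy[OF tl T(1)] .
  have V: "lnk P (UL (c n)) (c n)" "lnk P (c n) (NE (c n))" using valleys[OF tl lc, of n] by auto
  have UT: "UL (c n) \<in> ?T" using lnk_same[OF tl V(1) T(1) T(2)] .
  have NT: "NE (c n) \<in> ?T" using lnk_same2[OF tl V(2) T(1) T(2)] .
  have aL: "UL (c n) \<in> ?L" using UT by simp
  have bR: "NE (c n) \<in> ?R" using NT by simp
  have S: "tile_start ?T \<in> ?T" "\<And>y. y \<in> ?T \<Longrightarrow> column (tile_start ?T) \<le> column y" using start_prop[OF pT] by auto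
  have E: "tile_end ?T \<in> ?T" "\<And>y. y \<in> ?T \<Longrightarrow> column y \<le> column (tile_end ?T)" using end_prop[OF pT] by auto
  have hs: "height (tile_start ?T) = Mx ?T" "height (tile_end ?T) = Mx ?T" using dT unfolding dy_def by auto
  have pL: "pth ?L"
  proof (rule pth_sub[OF pT])
    show "?L \<subseteq> ?T" by blast
    show "?L \<noteq> {}" using aL by blast
    fix x y z assume "x \<in> ?L" "y \<in> ?L" "z \<in> ?T" "column x \<le> column z" "column z \<le> column y"
    then show "z \<in> ?L" by simp
  qed
  have pR: "pth ?R"
  proof (rule pth_sub[OF pT])
    show "?R \<subseteq> ?T" by blast
    show "?R \<noteq> {}" using bR by blast
    fix x y z assume "x \<in> ?R" "y \<in> ?R" "z \<in> ?T" "column x \<le> column z" "column z \<le> column y"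
    then show "z \<in> ?R" by simp
  qed
  have sL: "tile_start ?T \<in> ?L" using S(1) S(2)[OF UT] by simp
  have eR: "tile_end ?T \<in> ?R" using E(1) E(2)[OF NT] by simp
  have stL: "tile_start ?L = tile_start ?T" by (rule start_char[OF pL sL]) (use S(2) in auto)
  have enL: "tile_end ?L = UL (c n)" by (rule end_char[OF pL aL]) auto
  have stR: "tile_start ?R = NE (c n)" by (rule start_char[OF pR bR]) auto
  have enR: "tile_end ?R = tile_end ?T" by (rule end_char[OF pR eR]) (use E(2) in auto)
  have MxL: "Mx ?L = Mx ?T" by (rule Mx_eqI[OF pL sL hs(1)]) (use Mx_ge[OF pT] in auto)
  have MxR: "Mx ?R = Mx ?T" by (rule Mx_eqI[OF pR eR hs(2)]) (use Mx_ge[OF pT] in auto)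
  have dL: "dy ?L" unfolding dy_def using pL stL enL MxL hs MxT by simp
  have dR: "dy ?R" unfolding dy_def using pR stR enR MxR hs MxT by simp
  show ?thesis using dL dR aL bR by blast
qed

lemma sig_tile:
  assumes P: "P \<in> A1" and W: "W \<in> spl P (c n)"
  shows "dy (upS n ` W)"
proof -
  have PA: "P \<in> A" using P unfolding A1_def by simp
  have tl: "tiling D P" using PA unfolding A_def by simp
  let ?T = "tile_of P (c n)"
  let ?L = "{x\<in>?T. column x < column (c n)}" and ?R = "{x\<in>?T. column (c n) < column x}"
  have T: "?T \<in> P" "c n \<in> ?T" using tile_of_in[OF tl cD] by auto
  have LR: "dy ?L" "dy ?R" using LR_dy[OF P] by auto
  consider "W = ?L" | "W = ?R" | "W \<in> P" "W \<noteq> ?T" using W unfolding spl_def by blast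
  then show ?thesis
  proof cases
    case 1
    have "upS n ` W = W" by (rule upS_nocol) (use 1 in auto)
    then show ?thesis using LR 1 by simp
  next
    case 2
    have "upS n ` W = W" by (rule upS_nocol) (use 2 in auto)
    then show ?thesis using LR 2 by simp
  next
    case 3
    show ?thesis
    proof (cases "\<exists>t<n. c t \<in> W")
      case True
      then obtain t where t: "t < n" "c t \<in> W" by blast
      have "tile_of P (c t) = W" using tile_of_eq[OF tl 3(1) t(2)] .
      then have h: "height (c t) + 2 \<le> Mx W" using mx_lemV[OF PA t(1)] by simp
      show ?thesis by (rule shift_tile[OF PA 3(1) _ t(2) t(1) h]) (use t in simp)
    next
      case False
      have "upS n ` W = W"
      proof -
        have "upS n x = x" if "x \<in> W" for x by (rule upS_id) (use False that in blast)
        then show ?thesis by simp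
      qed
      then show ?thesis using t_dy[OF tl 3(1)] by simp
    qed
  qed
qed

lemma lnk_sig:
  assumes P: "P \<in> A1"
  shows "lnk (sig P) u v \<longleftrightarrow> (\<exists>x y. lnk P x y \<and> x \<noteq> c n \<and> y \<noteq> c n \<and> u = upS n x \<and> v = upS n y)"
proof -
  have tl: "tiling D P" using P unfolding A1_def A_def by simp
  have LR: "dy {x\<in>tile_of P (c n). column x < column (c n)}" "dy {x\<in>tile_of P (c n). column (c n) < column x}"
    using LR_dy[OF P] by auto
  have "lnk (sig P) u v \<longleftrightarrow> (\<exists>x y. lnk (spl P (c n)) x y \<and> u = upS n x \<and> v = upS n y)"
    unfolding sig_def by (rule lnk_tau)
  also have "\<dots> \<longleftrightarrow> (\<exists>x y. lnk P x y \<and> x \<noteq> c n \<and> y \<noteq> c n \<and> u = upS n x \<and> v = upS n y)"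
    using lnk_spl[OF tl cD[OF order_refl] LR] by simp
  finally show ?thesis .
qed

lemma sig_in:
  assumes P: "P \<in> A1"
  shows "sig P \<in> B"
proof -
  have PA: "P \<in> A" using P unfolding A1_def by simp
  have tl: "tiling D P" and lc: "loc D P" using PA unfolding A_def by auto
  have LR: "dy {x\<in>tile_of P (c n). column x < column (c n)}" "dy {x\<in>tile_of P (c n). column (c n) < column x}"
    using LR_dy[OF P] by auto
  have tl1: "tiling (D - {c n}) (spl P (c n))" by (rule spl_tiling[OF tl cD[OF order_refl] LR])
  have tl2: "tiling D1 (sig P)"
    using tiling_image[OF tl1 inj_upS[of n D] sig_tile[OF P]] upS_D1 unfolding sig_def by simp
  have V: "lnk P (UL (c n)) (c n)" "lnk P (c n) (NE (c n))" using valleys[OF tl lc, of n] by auto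
  let ?g = "upS n"
  have gid2: "?g u = u \<and> u \<noteq> c n" if "u \<in> D" "u \<noteq> m" "\<not> (\<exists>t<n. u = c (Suc t))" for u
  proof
    show "?g u = u"
    proof (rule upS_id)
      fix s assume "s < n"
      show "u \<noteq> c s"
      proof (cases s)
        case 0 then show ?thesis using that c0 by simp
      next
        case (Suc s') then show ?thesis using that \<open>s < n\<close> by auto
      qed
    qed
    show "u \<noteq> c n"
    proof (cases n)
      case 0 then show ?thesis using that c0 by simp
    next
      case (Suc n') then show ?thesis using that by auto
    qed
  qed
  have UL_NE: "UL (NE x) = up x" for x by (simp add: nds up_def)
  have loc2: "loc D1 (sig P)" unfolding loc_def
  proof (intro conjI ballI impI)
    fix u assume u: "u \<in> D1" "UL u \<in> D1"
    have "\<exists>x y. lnk P x y \<and> x \<noteq> c n \<and> y \<noteq> c n \<and> u = ?g y"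
    proof (cases "\<exists>t<n. u = c (Suc t)")
      case True
      then obtain t where t: "t < n" "u = c (Suc t)" by blast
      have "lnk P (UL (c t)) (c t)" using valleys[OF tl lc] t by simp
      moreover have "UL (c t) \<noteq> c n" by (rule col_ne) simp
      moreover have "c t \<noteq> c n" using t c_inj by simp
      moreover have "?g (c t) = u" using upS_c t by simp
      ultimately show ?thesis by metis
    next
      case False
      have uD: "u \<in> D" "u \<noteq> m" using u D1_eq by auto
      have gu: "?g u = u" "u \<noteq> c n" using gid2[OF uD False] by auto
      have "UL u \<in> D" using u D1_eq by simp
      then obtain w where w: "lnk P w u" using has_pred[OF tl lc cvxD uD(1)] by blast
      have "w \<noteq> c n"
      proof
        assume wc: "w = c n"
        then have "u = NE (c n) \<or> u = SE (c n)" using lnk_D[OF tl w] by simp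
        then show False
        proof
          assume "u = NE (c n)"
          then have "UL u = c (Suc n)" using UL_NE up_c by simp
          then show False using u l_notD D1_eq by simp
        next
          assume "u = SE (c n)"
          then have "NE (c n) = SE (c n)" using lnk_fun[OF tl V(2)] w wc by simp
          then show False by (simp add: nds)
        qed
      qed
      then show ?thesis using w gu by metis
    qed
    then show "\<exists>w. lnk (sig P) w u" using lnk_sig[OF P] by metis
  next
    fix u assume u: "u \<in> D1" "NE u \<in> D1"
    have "\<exists>x y. lnk P x y \<and> x \<noteq> c n \<and> y \<noteq> c n \<and> u = ?g x"
    proof (cases "\<exists>t<n. u = c (Suc t)")
      case True
      then obtain t where t: "t < n" "u = c (Suc t)" by blast
      have "lnk P (c t) (NE (c t))" using valleys[OF tl lc] t by simp
      moreover have "NE (c t) \<noteq> c n" by (rule col_ne) simp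
      moreover have "c t \<noteq> c n" using t c_inj by simp
      moreover have "?g (c t) = u" using upS_c t by simp
      ultimately show ?thesis by metis
    next
      case False
      have uD: "u \<in> D" "u \<noteq> m" using u D1_eq by auto
      have gu: "?g u = u" "u \<noteq> c n" using gid2[OF uD False] by auto
      have "NE u \<in> D" using u D1_eq by simp
      then obtain y where y: "lnk P u y" using has_succ[OF tl lc cvxD uD(1)] by blast
      have "y \<noteq> c n"
      proof
        assume yc: "y = c n"
        then have "u = SW (c n) \<or> u = UL (c n)" using pred_cases[OF tl lc cvxD y] by simp
        then show False
        proof
          assume "u = UL (c n)"
          then have "NE u = c (Suc n)" using NE_UL up_c by simp
          then show False using u l_notD D1_eq by simp
        next
          assume "u = SW (c n)"
          then have "SW (c n) = UL (c n)" using lnk_inj[OF tl _ V(1)] y yc by simp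
          then show False using SW_ne_UL by metis
        qed
      qed
      then show ?thesis using y gu by metis
    qed
    then show "\<exists>v. lnk (sig P) u v" using lnk_sig[OF P] by metis
  qed
  show ?thesis unfolding B_def using tl2 loc2 by simp
qed

end



context S
begin

lemma phB_facts:
  assumes Q: "Q \<in> B"
  defines "Q0 \<equiv> (`) (dnS n) ` Q" and "TL \<equiv> tile_of Q (UL (c n))" and "TR \<equiv> tile_of Q (NE (c n))"
  shows "tiling (D - {c n}) Q0 \<and> TL \<in> Q0 \<and> TR \<in> Q0 \<and> UL (c n) \<in> TL \<and> NE (c n) \<in> TR
    \<and> tile_of Q0 (UL (c n)) = TL \<and> tile_of Q0 (NE (c n)) = TR
    \<and> (\<forall>x\<in>TL. column x < column (c n)) \<and> (\<forall>x\<in>TR. column (c n) < column x) \<and> TL \<noteq> TR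
    \<and> dy (TL \<union> {c n} \<union> TR) \<and> Mx (TL \<union> {c n} \<union> TR) = height (c n) + 1"
proof -
  have tl: "tiling D1 Q" and lc: "loc D1 Q" using Q unfolding B_def by auto
  let ?a = "UL (c n)" and ?b = "NE (c n)"
  have pk: "\<And>t. 1 \<le> t \<Longrightarrow> t \<le> n \<Longrightarrow> lnk Q (SW (c t)) (c t) \<and> lnk Q (c t) (SE (c t))"
    using peaks1[OF tl lc] by blast
  have aD: "?a \<in> D1" using inD1[OF ULD UL_ne_m[OF cD]] by simp
  have bD: "?b \<in> D1" using inD1[OF NED NE_ne_m[OF cD]] by simp
  have lD1: "c (Suc n) \<notin> D1" using l_notD D1_eq by simp
  have nosucc: "\<not> lnk Q ?a y" for y
  proof
    assume y: "lnk Q ?a y"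
    then have "y = NE ?a \<or> y = SE ?a" using lnk_D[OF tl y] by blast
    moreover have "y \<noteq> NE ?a" using lnk_D[OF tl y] NE_UL up_c lD1 by auto
    ultimately have yc: "y = c n" using SE_UL by simp
    show False
    proof (cases n)
      case 0 then show False using lnk_D[OF tl y] yc c0 m_notD1 by simp
    next
      case (Suc s)
      then have "lnk Q (SW (c n)) (c n)" using pk[of n] by simp
      then have "SW (c n) = ?a" using lnk_inj[OF tl] y yc by metis
      then show False using SW_ne_UL by metis
    qed
  qed
  have UL_NE: "UL (NE x) = up x" for x by (simp add: nds up_def)
  have nopred: "\<not> lnk Q w ?b" for w
  proof
    assume w: "lnk Q w ?b"
    have "w = SW ?b \<or> w = UL ?b" by (rule pred_cases[OF tl lc cvxD1 w])
    moreover have "w \<noteq> UL ?b" using lnk_D[OF tl w] UL_NE up_c lD1 by auto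
    ultimately have wc: "w = c n" using SW_NE by simp
    show False
    proof (cases n)
      case 0 then show False using lnk_D[OF tl w] wc c0 m_notD1 by simp
    next
      case (Suc s)
      then have "lnk Q (c n) (SE (c n))" using pk[of n] by simp
      then have "SE (c n) = ?b" using lnk_fun[OF tl] w wc by metis
      then show False by (simp add: nds)
    qed
  qed
  have TLi: "TL \<in> Q" "?a \<in> TL" using tile_of_in[OF tl aD] unfolding TL_def by auto
  have TRi: "TR \<in> Q" "?b \<in> TR" using tile_of_in[OF tl bD] unfolding TR_def by auto
  have pTL: "pth TL" using t_pth[OF tl TLi(1)] .
  have pTR: "pth TR" using t_pth[OF tl TRi(1)] .
  have epa: "ep Q ?a = column ?a"
  proof -
    have "\<not> column ?a < ep Q ?a" using succ_iff[OF tl aD] nosucc by blast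
    then show ?thesis using ep_ge[OF tl aD] by simp
  qed
  have spb: "sp Q ?b = column ?b"
  proof -
    have "\<not> sp Q ?b < column ?b" using pred_iff[OF tl bD] nopred by blast
    then show ?thesis using sp_le[OF tl bD] by simp
  qed
  have eTL: "tile_end TL = ?a"
  proof -
    have "column (tile_end TL) = column ?a" using epa unfolding ep_def TL_def by simp
    then show ?thesis using pth_colinj[OF pTL] end_prop[OF pTL] TLi(2) by blast
  qed
  have sTR: "tile_start TR = ?b"
  proof -
    have "column (tile_start TR) = column ?b" using spb unfolding sp_def TR_def by simp
    then show ?thesis using pth_colinj[OF pTR] start_prop[OF pTR] TRi(2) by blast
  qed
  have cA: "\<forall>x\<in>TL. column x < column (c n)"
  proof
    fix x assume "x \<in> TL"
    then have "column x \<le> column (tile_end TL)" using end_prop[OF pTL] by blast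
    then show "column x < column (c n)" using eTL by simp
  qed
  have cB: "\<forall>x\<in>TR. column (c n) < column x"
  proof
    fix x assume "x \<in> TR"
    then have "column (tile_start TR) \<le> column x" using start_prop[OF pTR] by blast
    then show "column (c n) < column x" using sTR by simp
  qed
  have ne: "TL \<noteq> TR" using cA TRi(2) by fastforce
  have pk': "\<And>t. 1 \<le> t \<Longrightarrow> t \<le> n \<Longrightarrow> lnk Q (SW (c t)) (c t) \<and> lnk Q (c t) (SE (c t))" using pk .
  have dd: "\<And>T. T \<in> Q \<Longrightarrow> dy (dnS n ` T)" using phi_tile_gen[OF tl _ _ pk'] by simp
  have inj: "inj_on (dnS n) D1"
  proof -
    have "c 0 \<notin> D1" using m_notD1 c0 by simp
    then have "D1 = D1 - {c 0}" by simp
    then show ?thesis using inj_dnS[of n D1] by simp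
  qed
  have tl0: "tiling (D - {c n}) Q0" using tiling_image[OF tl inj dd] dnS_D1 unfolding Q0_def by simp
  have fL: "dnS n ` TL = TL" by (rule dnS_nocol) (use cA in auto)
  have fR: "dnS n ` TR = TR" by (rule dnS_nocol) (use cB in auto)
  have TL0: "TL \<in> Q0" using TLi(1) fL unfolding Q0_def by (metis imageI)
  have TR0: "TR \<in> Q0" using TRi(1) fR unfolding Q0_def by (metis imageI)
  have tL: "tile_of Q0 ?a = TL" by (rule tile_of_eq[OF tl0 TL0 TLi(2)])
  have tR: "tile_of Q0 ?b = TR" by (rule tile_of_eq[OF tl0 TR0 TRi(2)])
  have dTL: "dy TL" using t_dy[OF tl TLi(1)] .
  have dTR: "dy TR" using t_dy[OF tl TRi(1)] .
  have MTL: "Mx TL = height (c n) + 1" using dTL eTL unfolding dy_def by simp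
  have MTR: "Mx TR = height (c n) + 1" using dTR sTR unfolding dy_def by simp
  have vc: "valid_node (c n)" using cD[of n] lam_valid unfolding D_def by blast
  let ?M = "TL \<union> {c n} \<union> TR"
  have pM: "pth ?M"
  proof (rule pth_merge[OF pTL pTR vc])
    show "\<And>x. x \<in> TL \<Longrightarrow> column x < column (c n)" using cA by blast
    show "\<And>x. x \<in> TR \<Longrightarrow> column (c n) < column x" using cB by blast
    show "column (tile_end TL) = column (c n) - 1" using eTL by simp
    show "column (tile_start TR) = column (c n) + 1" using sTR by simp
    show "c n = NE (tile_end TL) \<or> c n = SE (tile_end TL)" using eTL SE_UL by simp
    show "tile_start TR = NE (c n) \<or> tile_start TR = SE (c n)" using sTR by simp
  qed
  have sTL: "tile_start TL \<in> TL" "\<And>y. y \<in> TL \<Longrightarrow> column (tile_start TL) \<le> column y" using start_prop[OF pTL] by auto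
  have eTR: "tile_end TR \<in> TR" "\<And>y. y \<in> TR \<Longrightarrow> column y \<le> column (tile_end TR)" using end_prop[OF pTR] by auto
  have sM: "tile_start ?M = tile_start TL"
  proof (rule start_char[OF pM])
    show "tile_start TL \<in> ?M" using sTL by blast
    have "column (tile_start TL) < column (c n)" using cA sTL by blast
    then show "\<forall>y\<in>?M. column (tile_start TL) \<le> column y" using sTL(2) cB by fastforce
  qed
  have eM: "tile_end ?M = tile_end TR"
  proof (rule end_char[OF pM])
    show "tile_end TR \<in> ?M" using eTR by blast
    have "column (c n) < column (tile_end TR)" using cB eTR by blast
    then show "\<forall>y\<in>?M. column y \<le> column (tile_end TR)" using eTR(2) cA by fastforce
  qed
  have hsTL: "height (tile_start TL) = height (c n) + 1" using dTL MTL unfolding dy_def by simp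
  have heTR: "height (tile_end TR) = height (c n) + 1" using dTR MTR unfolding dy_def by simp
  have MM: "Mx ?M = height (c n) + 1"
  proof (rule Mx_eqI[OF pM _ hsTL])
    show "tile_start TL \<in> ?M" using sTL by blast
    fix y assume "y \<in> ?M"
    then consider "y \<in> TL" | "y = c n" | "y \<in> TR" by blast
    then show "height y \<le> height (c n) + 1"
      by cases (use Mx_ge[OF pTL] Mx_ge[OF pTR] MTL MTR in auto)
  qed
  have dM: "dy ?M" unfolding dy_def using pM sM eM hsTL heTR MM by simp
  show ?thesis using tl0 TL0 TR0 TLi(2) TRi(2) tL tR cA cB ne dM MM by blast
qed

lemma phB_eq:
  assumes Q: "Q \<in> B"
  shows "phB Q = insert (tile_of Q (UL (c n)) \<union> {c n} \<union> tile_of Q (NE (c n)))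
     ((`) (dnS n) ` Q - {tile_of Q (UL (c n)), tile_of Q (NE (c n))})"
  using phB_facts[OF Q] unfolding phB_def mrg_def by simp

end



context S
begin

lemma phB_in:
  assumes Q: "Q \<in> B"
  shows "phB Q \<in> A1"
proof -
  have tl: "tiling D1 Q" and lc: "loc D1 Q" using Q unfolding B_def by auto
  let ?a = "UL (c n)" and ?b = "NE (c n)"
  let ?Q0 = "(`) (dnS n) ` Q" and ?TL = "tile_of Q ?a" and ?TR = "tile_of Q ?b"
  note F = phB_facts[OF Q]
  have tl0: "tiling (D - {c n}) ?Q0" using F by blast
  have tL: "tile_of ?Q0 ?a = ?TL" and tR: "tile_of ?Q0 ?b = ?TR" using F by blast+
  have cA: "\<And>x. x \<in> tile_of ?Q0 ?a \<Longrightarrow> column x < column (c n)" using F tL by auto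
  have cB: "\<And>x. x \<in> tile_of ?Q0 ?b \<Longrightarrow> column (c n) < column x" using F tR by auto
  have ne: "tile_of ?Q0 ?a \<noteq> tile_of ?Q0 ?b" using F tL tR by simp
  have dM: "dy (tile_of ?Q0 ?a \<union> {c n} \<union> tile_of ?Q0 ?b)" using F tL tR by simp
  have MM: "Mx (tile_of ?Q0 ?a \<union> {c n} \<union> tile_of ?Q0 ?b) = height (c n) + 1" using F tL tR by simp
  have cE: "c n \<notin> D - {c n}" by simp
  have aE: "?a \<in> D - {c n}" using ULD[of n] by (simp add: col_ne)
  have bE: "?b \<in> D - {c n}" using NED[of n] by (simp add: col_ne)
  have tlD: "tiling D (phB Q)"
  proof -
    have "tiling (insert (c n) (D - {c n})) (phB Q)" unfolding phB_def by (rule mrg_tiling[OF tl0 cE aE bE ne dM])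
    moreover have "insert (c n) (D - {c n}) = D" using cD[of n] by blast
    ultimately show ?thesis by simp
  qed
  have lm: "lnk (phB Q) u v \<longleftrightarrow> lnk ?Q0 u v \<or> (u = ?a \<and> v = c n) \<or> (u = c n \<and> v = ?b)" for u v
    unfolding phB_def by (rule lnk_mrg[OF tl0 cE aE bE ne dM cA cB]) simp_all
  have lQ0: "lnk ?Q0 u v \<longleftrightarrow> (\<exists>x y. lnk Q x y \<and> u = dnS n x \<and> v = dnS n y)" for u v by (rule lnk_phi)
  have pk: "\<And>t. 1 \<le> t \<Longrightarrow> t \<le> n \<Longrightarrow> lnk Q (SW (c t)) (c t) \<and> lnk Q (c t) (SE (c t))"
    using peaks1[OF tl lc] by blast
  have gid2: "dnS n u = u" if "u \<in> D" "\<not> (\<exists>t\<le>n. u = c t)" for u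
  proof (rule dnS_id)
    fix r assume "1 \<le> r" "r \<le> n"
    then show "u \<noteq> c r" using that by auto
  qed
  have loc2: "loc D (phB Q)" unfolding loc_def
  proof (intro conjI ballI impI)
    fix u assume u: "u \<in> D" "UL u \<in> D"
    show "\<exists>w. lnk (phB Q) w u"
    proof (cases "u = c n")
      case True then show ?thesis using lm by blast
    next
      case False
      show ?thesis
      proof (cases "\<exists>t\<le>n. u = c t")
        case True
        then obtain t where t: "t \<le> n" "u = c t" by blast
        then have tn: "t < n" using False by (cases "t = n") auto
        have "lnk Q (SW (c (Suc t))) (c (Suc t))" using pk[of "Suc t"] tn by simp
        moreover have "dnS n (c (Suc t)) = u" using dnS_c tn t by simp
        ultimately have "lnk ?Q0 (dnS n (SW (c (Suc t)))) u" using lQ0 by metis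
        then show ?thesis using lm by blast
      next
        case False
        have gu: "dnS n u = u" using gid2[OF u(1) False] .
        have um: "u \<noteq> m" using False c0 by auto
        have "UL u \<in> D1" using inD1[OF u(2) UL_ne_m[OF u(1)]] .
        then obtain w where "lnk Q w u" using has_pred[OF tl lc cvxD1 inD1[OF u(1) um]] by blast
        then have "lnk ?Q0 (dnS n w) u" using lQ0 gu by metis
        then show ?thesis using lm by blast
      qed
    qed
  next
    fix u assume u: "u \<in> D" "NE u \<in> D"
    show "\<exists>v. lnk (phB Q) u v"
    proof (cases "u = c n")
      case True then show ?thesis using lm by blast
    next
      case False
      show ?thesis
      proof (cases "\<exists>t\<le>n. u = c t")
        case True
        then obtain t where t: "t \<le> n" "u = c t" by blast
        then have tn: "t < n" using False by (cases "t = n") auto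
        have "lnk Q (c (Suc t)) (SE (c (Suc t)))" using pk[of "Suc t"] tn by simp
        moreover have "dnS n (c (Suc t)) = u" using dnS_c tn t by simp
        ultimately have "lnk ?Q0 u (dnS n (SE (c (Suc t))))" using lQ0 by metis
        then show ?thesis using lm by blast
      next
        case False
        have gu: "dnS n u = u" using gid2[OF u(1) False] .
        have um: "u \<noteq> m" using False c0 by auto
        have "NE u \<in> D1" using inD1[OF u(2) NE_ne_m[OF u(1)]] .
        then obtain y where "lnk Q u y" using has_succ[OF tl lc cvxD1 inD1[OF u(1) um]] by blast
        then have "lnk ?Q0 u (dnS n y)" using lQ0 gu by metis
        then show ?thesis using lm by blast
      qed
    qed
  qed
  have Min: "tile_of ?Q0 ?a \<union> {c n} \<union> tile_of ?Q0 ?b \<in> phB Q" unfolding phB_def mrg_def by (rule insertI1)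
  have "tile_of (phB Q) (c n) = tile_of ?Q0 ?a \<union> {c n} \<union> tile_of ?Q0 ?b"
    by (rule tile_of_eq[OF tlD Min]) simp
  then have "Mx (tile_of (phB Q) (c n)) = height (c n) + 1" using MM by simp
  then show ?thesis unfolding A1_def A_def using tlD loc2 by simp
qed

lemma sig_phB:
  assumes Q: "Q \<in> B"
  shows "sig (phB Q) = Q"
proof -
  have tl: "tiling D1 Q" using Q unfolding B_def by auto
  let ?a = "UL (c n)" and ?b = "NE (c n)"
  let ?Q0 = "(`) (dnS n) ` Q" and ?TL = "tile_of Q ?a" and ?TR = "tile_of Q ?b"
  note F = phB_facts[OF Q]
  have tl0: "tiling (D - {c n}) ?Q0" using F by blast
  have tL: "tile_of ?Q0 ?a = ?TL" and tR: "tile_of ?Q0 ?b = ?TR" using F by blast+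
  have cA: "\<And>x. x \<in> tile_of ?Q0 ?a \<Longrightarrow> column x < column (c n)" using F tL by auto
  have cB: "\<And>x. x \<in> tile_of ?Q0 ?b \<Longrightarrow> column (c n) < column x" using F tR by auto
  have ne: "tile_of ?Q0 ?a \<noteq> tile_of ?Q0 ?b" using F tL tR by simp
  have dM: "dy (tile_of ?Q0 ?a \<union> {c n} \<union> tile_of ?Q0 ?b)" using F tL tR by simp
  have cE: "c n \<notin> D - {c n}" by simp
  have aE: "?a \<in> D - {c n}" using ULD[of n] by (simp add: col_ne)
  have bE: "?b \<in> D - {c n}" using NED[of n] by (simp add: col_ne)
  have "spl (phB Q) (c n) = ?Q0" unfolding phB_def by (rule spl_mrg[OF tl0 cE aE bE ne dM cA cB])
  then have "sig (phB Q) = (`) (upS n) ` ?Q0" unfolding sig_def by simp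
  also have "\<dots> = Q"
  proof (rule img_img)
    fix x assume "x \<in> \<Union>Q"
    then have "x \<noteq> c 0" using t_union[OF tl] m_notD1 c0 by auto
    then show "upS n (dnS n x) = x" by (rule upS_dnS)
  qed
  finally show ?thesis .
qed

lemma phB_sig:
  assumes P: "P \<in> A1"
  shows "phB (sig P) = P"
proof -
  have tl: "tiling D P" using P unfolding A1_def A_def by simp
  have LR: "dy {x\<in>tile_of P (c n). column x < column (c n)}" "dy {x\<in>tile_of P (c n). column (c n) < column x}"
    "UL (c n) \<in> {x\<in>tile_of P (c n). column x < column (c n)}" "NE (c n) \<in> {x\<in>tile_of P (c n). column (c n) < column x}"
    using LR_dy[OF P] by auto
  have tl1: "tiling (D - {c n}) (spl P (c n))" by (rule spl_tiling[OF tl cD[OF order_refl] LR(1,2)])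
  have "(`) (dnS n) ` sig P = spl P (c n)" unfolding sig_def
  proof (rule img_img)
    fix x assume "x \<in> \<Union>(spl P (c n))"
    then have "x \<noteq> c n" using t_union[OF tl1] by auto
    then show "dnS n (upS n x) = x" by (rule dnS_upS)
  qed
  then have "phB (sig P) = mrg (spl P (c n)) (c n) (UL (c n)) (NE (c n))" unfolding phB_def by simp
  also have "\<dots> = P" by (rule mrg_spl[OF tl cD[OF order_refl] LR])
  finally show ?thesis .
qed

lemma bij_sig: "bij_betw sig A1 B"
proof (rule bij_betw_byWitness[where f' = phB])
  show "\<forall>P\<in>A1. phB (sig P) = P" using phB_sig by blast
  show "\<forall>Q\<in>B. sig (phB Q) = Q" using sig_phB by blast
  show "sig ` A1 \<subseteq> B" using sig_in by blast
  show "phB ` B \<subseteq> A1" using phB_in by blast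
qed

lemma finD: "finite D" unfolding D_def using part_fin[OF plam] by simp

lemma card_main: "card A = card B + card C"
proof -
  have "A \<subseteq> Pow (Pow D)" unfolding A_def using t_sub by blast
  then have fA: "finite A" using finD by (meson finite_Pow_iff finite_subset)
  have sub: "A1 \<subseteq> A" unfolding A1_def by blast
  have "card A = card (A1 \<union> (A - A1))" using sub by (simp add: Un_absorb1)
  also have "\<dots> = card A1 + card (A - A1)"
    by (rule card_Un_disjoint) (use fA sub finite_subset in auto)
  also have "card A1 = card B" by (rule bij_betw_same_card[OF bij_sig])
  also have "card (A - A1) = card C" by (rule bij_betw_same_card[OF bij_tau])
  finally show ?thesis .
qed

end



lemma e_num_ce: "mu \<subseteq> lam \<Longrightarrow> e_num lam mu = card {P. tiling (lam - mu) P \<and> ce (lam - mu) P}"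
  unfolding e_num_def dt_tiling ce_cover by simp

lemma e_num_loc:
  assumes "is_partition lam" "is_partition mu" "mu \<subseteq> lam"
  shows "e_num lam mu = card {P. tiling (lam - mu) P \<and> loc (lam - mu) P}"
proof -
  have cv: "cvx (lam - mu)" by (rule cvx_diff[OF assms(1,2)])
  have "{P. tiling (lam - mu) P \<and> ce (lam - mu) P} = {P. tiling (lam - mu) P \<and> loc (lam - mu) P}"
    using ce_iff_loc[OF _ cv] by blast
  then show ?thesis using e_num_ce[OF assms(3)] by simp
qed

theorem corollary4p7:
  fixes j :: int and lam mu :: "node set" and l m :: node
  assumes "is_partition lam" and "is_partition mu"
    and "addable lam l" and "column l = j"
    and "addable mu m" and "column m = j"
  shows "e_num lam mu = e_num lam (insert m mu) + e_num (insert l lam) (insert m mu)"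
proof -
  note plam = assms(1) and pmu = assms(2) and al = assms(3) and am = assms(5)
  have cl: "column l = column m" using assms(4,6) by simp
  have vm: "valid_node m" and mmu: "m \<notin> mu" and pmu': "is_partition (insert m mu)"
    using am unfolding addable_def by auto
  have vl: "valid_node l" and llam: "l \<notin> lam" and plam': "is_partition (insert l lam)"
    using al unfolding addable_def by auto
  have diag: "(fst l \<le> fst m \<and> snd l \<le> snd m) \<or> (fst m \<le> fst l \<and> snd m \<le> snd l)"
    using cl unfolding column_def by linarith
  show ?thesis
  proof (cases "mu \<subseteq> lam")
    case False
    have z1: "e_num lam mu = 0" using False unfolding e_num_def by simp
    have z2: "e_num lam (insert m mu) = 0" using False unfolding e_num_def by simp
    have "\<not> insert m mu \<subseteq> insert l lam"
    proof
      assume H: "insert m mu \<subseteq> insert l lam"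
      obtain x where x: "x \<in> mu" "x \<notin> lam" using False by blast
      then have "x = l" using H by blast
      then have lmu: "l \<in> mu" using x by simp
      have "m \<noteq> l" using lmu mmu by blast
      then have mlam: "m \<in> lam" using H by blast
      from diag show False
      proof
        assume "fst l \<le> fst m \<and> snd l \<le> snd m"
        then have "l \<in> lam" using part_down[OF plam mlam, of l] vl unfolding valid_node_def by auto
        then show False using llam by simp
      next
        assume "fst m \<le> fst l \<and> snd m \<le> snd l"
        then have "m \<in> mu" using part_down[OF pmu lmu, of m] vm unfolding valid_node_def by auto
        then show False using mmu by simp
      qed
    qed
    then have z3: "e_num (insert l lam) (insert m mu) = 0" unfolding e_num_def by (rule if_not_P)
    show ?thesis using z1 z2 z3 by simp
  next
    case sub: True
    show ?thesis
    proof (cases "m = l")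
      case True
      have z2: "e_num lam (insert m mu) = 0" using True llam unfolding e_num_def by simp
      have "l \<notin> mu" using llam sub by blast
      then have eq: "insert l lam - insert m mu = lam - mu" using True llam by blast
      have "e_num (insert l lam) (insert m mu) = e_num lam mu"
        using e_num_ce[OF sub] e_num_ce[of "insert m mu" "insert l lam"] sub True eq by auto
      then show ?thesis using z2 by simp
    next
      case False
      define d where "d = fst l - fst m"
      have dd: "snd l - snd m = d" using cl unfolding column_def d_def by linarith
      have d1: "1 \<le> d"
      proof (rule ccontr)
        assume "\<not> 1 \<le> d"
        then have "fst l \<le> fst m" "snd l \<le> snd m" using dd d_def by auto
        then have "l \<in> mu" using addable_below[OF am vl] False by auto
        then show False using sub llam by blast
      qed
      define n where "n = nat (d - 1)"
      have leq: "l = (fst m + int (Suc n), snd m + int (Suc n))"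
        using d1 dd d_def unfolding n_def by (cases l) auto
      interpret S: S lam mu m n
        by unfold_locales (use plam pmu sub am al leq in simp_all)
      have lc: "S.c (Suc n) = l" using leq unfolding S.c_def by simp
      have mlam: "m \<in> lam" using S.m_D unfolding S.D_def by blast
      have e1: "e_num lam mu = card S.A"
        unfolding S.A_def S.D_def by (rule e_num_loc[OF plam pmu sub])
      have e2: "e_num lam (insert m mu) = card S.B"
        unfolding S.B_def S.D1_def by (rule e_num_loc[OF plam pmu']) (use sub mlam in blast)
      have e3: "e_num (insert l lam) (insert m mu) = card S.C"
        unfolding S.C_def S.D2_def lc by (rule e_num_loc[OF plam' pmu']) (use sub mlam in blast)
      show ?thesis using e1 e2 e3 S.card_main by simp
    qed
  qed
qed


end
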